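(* Fix one of the types A, B, D below with its group $G$ of orthogonal transformations of $\mathbb{R}^n$ and its domain $C\subset\mathbb{R}^n$. Let $(\xi_1,\dots,\xi_n)$ be a tuple of random vectors in $\mathbb{R}^d$ satisfying all assumptions of that type except possibly the general position assumption, with associated convex hull $H_{n,d}$, and let $A$ be the random $d\times n$ matrix with columns $\xi_1,\dots,\xi_n$, viewed as a linear map $\mathbb{R}^n\to\mathbb{R}^d$. Then for every $g\in G$, $$\mathbb{P}[0\in H_{n,d}]=\mathbb{P}[\ker A\cap(g\bar C)\neq\{0\}].$$
   Context: $e_1,\dots,e_n$ is the standard basis of $\mathbb{R}^n$ and $\bar C$ the closure of $C$. For a tuple $(\xi_1,\dots,\xi_n)$ of random vectors in $\mathbb{R}^d$, put $S_k=\xi_1+\dots+\xi_k$ and $S_n^*=S_{n-1}-\xi_n$. Type A: $n\ge d+1$; the tuple is exchangeable ($(\xi_1,\dots,\xi_n)\stackrel{d}{=}(\xi_{\sigma(1)},\dots,\xi_{\sigma(n)})$ for all permutations $\sigma$); $S_n=0$ a.s.; general position assumption: any $d$ vectors among $S_1,\dots,S_{n-1}$ are linearly independent a.s.; $H_{n,d}=\mathrm{Conv}(S_1,\dots,S_{n-1})$; $G$ consists of the maps $g_\sigma(e_k)=e_{\sigma(k)}$, $\sigma$ a permutation of $\{1,\dots,n\}$; $C=\{x\in\mathbb{R}^n:x_1<\dots<x_n,\ x_1+\dots+x_n=0\}$. Type B: $n\ge d$; $(\xi_1,\dots,\xi_n)\stackrel{d}{=}(\varepsilon_1\xi_{\sigma(1)},\dots,\varepsilon_n\xi_{\sigma(n)})$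 for all permutations $\sigma$ and all signs $\varepsilon_i\in\{-1,1\}$; general position assumption: any $d$ vectors among $S_1,\dots,S_n$ are linearly independent a.s.; $H_{n,d}=\mathrm{Conv}(S_1,\dots,S_n)$; $G$ consists of the maps $g_{\sigma,\varepsilon}(e_k)=\varepsilon_ke_{\sigma(k)}$ with $\sigma$ a permutation and $\varepsilon\in\{-1,1\}^n$; $C=\{x:0<x_1<\dots<x_n\}$. Type D: $n\ge\max\{2,d\}$; the same invariance as type B but only for signs with $\varepsilon_1\cdots\varepsilon_n=1$; general position assumption: any $d$ vectors from either collection $S_1,\dots,S_n$ or $S_1,\dots,S_{n-1},S_n^*$ are linearly independent a.s.; $H_{n,d}=\mathrm{Conv}(S_1,\dots,S_n,S_n^* )$; $G$ consists of the maps $g_{\sigma,\varepsilon}$ with $\varepsilon_1\cdots\varepsilon_n=1$; $C=\{x:0<|x_1|<x_2<\dots<x_n\}$. *)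

theory Defs
  imports "HOL-Probability.Probability"
begin

datatype rtype = TypeA | TypeB | TypeD

text \<open>Vectors of R^n are represented as functions nat => real supported on {1..n}
  (coordinates x 1, ..., x n); the topology is the product topology.\<close>
definition Rn :: "nat \<Rightarrow> (nat \<Rightarrow> real) set" where
  "Rn n = {x. \<forall>i. i \<notin> {1..n} \<longrightarrow> x i = 0}"

definition psum :: "(nat \<Rightarrow> 'w \<Rightarrow> real^'d) \<Rightarrow> nat \<Rightarrow> 'w \<Rightarrow> real^'d" where
  "psum \<xi> k \<omega> = (\<Sum>i=1..k. \<xi> i \<omega>)"

definition psum_star :: "(nat \<Rightarrow> 'w \<Rightarrow> real^'d) \<Rightarrow> nat \<Rightarrow> 'w \<Rightarrow> real^'d" where
  "psum_star \<xi> n \<omega> = psum \<xi> (n - 1) \<omega> - \<xi> n \<omega>"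

text \<open>Admissible sign vectors for each type (only values on {1..n} matter).\<close>
definition admissible_signs :: "rtype \<Rightarrow> nat \<Rightarrow> (nat \<Rightarrow> real) \<Rightarrow> bool" where
  "admissible_signs t n \<epsilon> \<longleftrightarrow>
     (\<forall>i\<in>{1..n}. \<epsilon> i \<in> {-1, 1}) \<and>
     (t = TypeA \<longrightarrow> (\<forall>i\<in>{1..n}. \<epsilon> i = 1)) \<and>
     (t = TypeD \<longrightarrow> (\<Prod>i=1..n. \<epsilon> i) = 1)"

definition joint_law :: "'w measure \<Rightarrow> nat \<Rightarrow> (nat \<Rightarrow> 'w \<Rightarrow> real^'d) \<Rightarrow> (nat \<Rightarrow> real^'d) measure" where
  "joint_law M n \<xi> = distr M (PiM {1..n} (\<lambda>_. borel)) (\<lambda>\<omega>. restrict (\<lambda>i. \<xi> i \<omega>) {1..n})"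

text \<open>All assumptions of the given type except the general position assumption.\<close>
definition type_assms :: "rtype \<Rightarrow> 'w measure \<Rightarrow> nat \<Rightarrow> (nat \<Rightarrow> 'w \<Rightarrow> real^'d) \<Rightarrow> bool" where
  "type_assms t M n \<xi> \<longleftrightarrow>
     prob_space M \<and>
     (\<forall>i\<in>{1..n}. \<xi> i \<in> borel_measurable M) \<and>
     (case t of
        TypeA \<Rightarrow> n \<ge> CARD('d) + 1
      | TypeB \<Rightarrow> n \<ge> CARD('d)
      | TypeD \<Rightarrow> n \<ge> max 2 CARD('d)) \<and>
     (\<forall>\<sigma> \<epsilon>. \<sigma> permutes {1..n} \<longrightarrow> admissible_signs t n \<epsilon> \<longrightarrow>
        joint_law M n \<xi> = joint_law M n (\<lambda>i \<omega>. \<epsilon> i *\<^sub>R \<xi> (\<sigma> i) \<omega>)) \<and>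
     (t = TypeA \<longrightarrow> (AE \<omega> in M. psum \<xi> n \<omega> = 0))"

definition hull_pts :: "rtype \<Rightarrow> nat \<Rightarrow> (nat \<Rightarrow> 'w \<Rightarrow> real^'d) \<Rightarrow> 'w \<Rightarrow> (real^'d) set" where
  "hull_pts t n \<xi> \<omega> = (case t of
      TypeA \<Rightarrow> convex hull ((\<lambda>k. psum \<xi> k \<omega>) ` {1..n-1})
    | TypeB \<Rightarrow> convex hull ((\<lambda>k. psum \<xi> k \<omega>) ` {1..n})
    | TypeD \<Rightarrow> convex hull (insert (psum_star \<xi> n \<omega>) ((\<lambda>k. psum \<xi> k \<omega>) ` {1..n})))"

text \<open>The orthogonal map g_{sigma,eps}: e_k |-> eps_k e_{sigma(k)}.\<close>
definition gmap :: "nat \<Rightarrow> (nat \<Rightarrow> nat) \<Rightarrow> (nat \<Rightarrow> real) \<Rightarrow> (nat \<Rightarrow> real) \<Rightarrow> (nat \<Rightarrow> real)" where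
  "gmap n \<sigma> \<epsilon> x = (\<lambda>j. if j \<in> {1..n}
      then \<epsilon> (inv_into {1..n} \<sigma> j) * x (inv_into {1..n} \<sigma> j) else 0)"

definition Grp :: "rtype \<Rightarrow> nat \<Rightarrow> ((nat \<Rightarrow> real) \<Rightarrow> (nat \<Rightarrow> real)) set" where
  "Grp t n = {gmap n \<sigma> \<epsilon> | \<sigma> \<epsilon>. \<sigma> permutes {1..n} \<and> admissible_signs t n \<epsilon>}"

definition chamber :: "rtype \<Rightarrow> nat \<Rightarrow> (nat \<Rightarrow> real) set" where
  "chamber t n = {x \<in> Rn n. (\<forall>i\<in>{1..<n}. x i < x (Suc i)) \<and>
      (case t of
         TypeA \<Rightarrow> (\<Sum>i=1..n. x i) = 0
       | TypeB \<Rightarrow> 0 < x 1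
       | TypeD \<Rightarrow> 0 < \<bar>x 1\<bar> \<and> (n \<ge> 2 \<longrightarrow> \<bar>x 1\<bar> < x 2))}"

definition kerA :: "nat \<Rightarrow> (nat \<Rightarrow> 'w \<Rightarrow> real^'d) \<Rightarrow> 'w \<Rightarrow> (nat \<Rightarrow> real) set" where
  "kerA n \<xi> \<omega> = {x \<in> Rn n. (\<Sum>i=1..n. x i *\<^sub>R \<xi> i \<omega>) = 0}"

end

theory Submission
  imports Defs
begin


definition linc :: "nat \<Rightarrow> (nat \<Rightarrow> real) \<Rightarrow> (nat \<Rightarrow> 'a::real_vector) \<Rightarrow> 'a" where
  "linc n x y = (\<Sum>i=1..n. x i *\<^sub>R y i)"

definition Ev :: "nat \<Rightarrow> (nat \<Rightarrow> real) set \<Rightarrow> (nat \<Rightarrow> 'a::real_vector) set" where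
  "Ev n K = {y. \<exists>x\<in>K. x \<noteq> (\<lambda>_. 0) \<and> linc n x y = 0}"

definition seqcl :: "(nat \<Rightarrow> real) set \<Rightarrow> bool" where
  "seqcl K \<longleftrightarrow> (\<forall>X x. (\<forall>j. X j \<in> K) \<longrightarrow> (\<forall>i. (\<lambda>j. X j i) \<longlonglongrightarrow> x i) \<longrightarrow> x \<in> K)"

lemma tendsto_coord:
  fixes X :: "nat \<Rightarrow> (nat \<Rightarrow> real)"
  assumes "X \<longlonglongrightarrow> x" shows "(\<lambda>j. X j i) \<longlonglongrightarrow> x i"
proof -
  have "continuous_on UNIV (\<lambda>x::nat\<Rightarrow>real. x i)" by simp
  then show ?thesis using continuous_on_tendsto_compose[OF _ assms, of UNIV "\<lambda>x. x i"] by auto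
qed

lemma seqcl_closed: "seqcl K \<Longrightarrow> closed K"
  unfolding closed_sequential_limits seqcl_def using tendsto_coord by blast

lemma dense_subset:
  fixes B :: "'a::second_countable_topology set"
  obtains D where "countable D" "D \<subseteq> B" "\<And>V. open V \<Longrightarrow> V \<inter> B \<noteq> {} \<Longrightarrow> D \<inter> V \<noteq> {}"
proof -
  obtain BB :: "'a set set" where BB: "countable BB" "topological_basis BB"
    using ex_countable_basis by blast
  define D where "D = (\<lambda>U. SOME x. x \<in> U \<inter> B) ` {U\<in>BB. U \<inter> B \<noteq> {}}"
  have "countable D" unfolding D_def using BB by auto
  moreover have "D \<subseteq> B" unfolding D_def by (auto intro: someI2_ex)
  moreover have "D \<inter> V \<noteq> {}" if oV: "open V" "V \<inter> B \<noteq> {}" for V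
  proof -
    obtain x where x: "x \<in> V" "x \<in> B" using oV(2) by blast
    obtain U where U: "U \<in> BB" "x \<in> U" "U \<subseteq> V" using topological_basisE[OF BB(2) \<open>open V\<close> x(1)] by blast
    have "(SOME x. x \<in> U \<inter> B) \<in> U \<inter> B" using U x by (intro someI) auto
    moreover have "(SOME x. x \<in> U \<inter> B) \<in> D" unfolding D_def using U x by auto
    ultimately show ?thesis using U by auto
  qed
  ultimately show ?thesis by (rule that)
qed

lemma subseq_coords:
  fixes X :: "nat \<Rightarrow> nat \<Rightarrow> real"
  assumes "finite I" "\<And>j i. i \<in> I \<Longrightarrow> \<bar>X j i\<bar> \<le> (c::real)"
  shows "\<exists>r. strict_mono r \<and> (\<forall>i\<in>I. \<exists>l. (\<lambda>j. X (r j) i) \<longlonglongrightarrow> l)"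
  using assms
proof (induction I rule: finite_induct)
  case empty
  have "strict_mono (id::nat\<Rightarrow>nat)" by (simp add: strict_mono_def)
  then show ?case by blast
next
  case (insert a I)
  then obtain r where r: "strict_mono r" "\<forall>i\<in>I. \<exists>l. (\<lambda>j. X (r j) i) \<longlonglongrightarrow> l" by auto
  have "bounded (range (\<lambda>j. X (r j) a))"
    using insert.prems[of a] by (intro boundedI[of _ c]) auto
  then obtain l r' where r': "strict_mono r'" "((\<lambda>j. X (r j) a) \<circ> r') \<longlonglongrightarrow> l"
    using bounded_imp_convergent_subsequence by blast
  have "strict_mono (r \<circ> r')" using r r' strict_mono_o by blast
  moreover have "\<exists>l. (\<lambda>j. X ((r \<circ> r') j) i) \<longlonglongrightarrow> l" if iI: "i \<in> insert a I" for i
  proof (cases "i = a")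
    case True then show ?thesis using r' by (auto simp: o_def)
  next
    case False
    then obtain l where "(\<lambda>j. X (r j) i) \<longlonglongrightarrow> l" using r(2) iI False by auto
    then have "((\<lambda>j. X (r j) i) \<circ> r') \<longlonglongrightarrow> l" using LIMSEQ_subseq_LIMSEQ r' by blast
    then show ?thesis by (auto simp: o_def)
  qed
  ultimately show ?case by blast
qed

lemma linc_cont: "continuous_on UNIV (\<lambda>x. linc n x (y::nat \<Rightarrow> 'a::real_normed_vector))"
  unfolding linc_def by (intro continuous_on_sum continuous_on_scaleR continuous_on_const) (auto intro: continuous_on_product_coordinates)

lemma linc_meas:
  "(\<lambda>y. linc n x y) \<in> borel_measurable (PiM {1..n} (\<lambda>_. (borel :: ('a::euclidean_space) measure)))"
  unfolding linc_def
  by (intro borel_measurable_sum borel_measurable_scaleR borel_measurable_const measurable_component_singleton) auto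


lemma linc_scale: "linc n (\<lambda>i. c * x i) y = c *\<^sub>R linc n x y"
  unfolding linc_def by (simp add: scaleR_sum_right)

lemma Rn_nonzero:
  assumes "x \<in> Rn n" "x \<noteq> (\<lambda>_. 0)" shows "0 < (\<Sum>i=1..n. \<bar>x i\<bar>)"
proof -
  obtain i where i: "x i \<noteq> 0" using assms(2) by auto
  then have "i \<in> {1..n}" using assms(1) unfolding Rn_def by auto
  then show ?thesis using i by (intro sum_pos2[of _ i]) auto
qed

lemma Ev_meas:
  fixes K :: "(nat \<Rightarrow> real) set"
  assumes KR: "K \<subseteq> Rn n" and cone: "\<And>x c. x \<in> K \<Longrightarrow> 0 < c \<Longrightarrow> (\<lambda>i. c * x i) \<in> K"
    and sc: "seqcl K"
  shows "{y \<in> space (PiM {1..n} (\<lambda>_. borel :: ('a::euclidean_space) measure)). y \<in> Ev n K}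
     \<in> sets (PiM {1..n} (\<lambda>_. borel :: 'a measure))"
proof -
  define N where "N = PiM {1..n} (\<lambda>_. borel :: 'a measure)"
  define B where "B = {x \<in> K. (\<Sum>i=1..n. \<bar>x i\<bar>) = 1}"
  obtain D where D: "countable D" "D \<subseteq> B" "\<And>V. open V \<Longrightarrow> V \<inter> B \<noteq> {} \<Longrightarrow> D \<inter> V \<noteq> {}"
    using dense_subset by blast
  have claim: "y \<in> Ev n K \<longleftrightarrow> (\<forall>j::nat. \<exists>x\<in>D. norm (linc n x y) < inverse (real (Suc j)))"
    for y :: "nat \<Rightarrow> 'a"
  proof
    assume "y \<in> Ev n K"
    then obtain x0 where x0: "x0 \<in> K" "x0 \<noteq> (\<lambda>_. 0)" "linc n x0 y = 0" unfolding Ev_def by auto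
    define s where "s = (\<Sum>i=1..n. \<bar>x0 i\<bar>)"
    have s: "0 < s" unfolding s_def using Rn_nonzero x0 KR by auto
    define x1 where "x1 = (\<lambda>i. (1/s) * x0 i)"
    have "x1 \<in> K" unfolding x1_def using x0 s by (intro cone) auto
    moreover have "(\<Sum>i=1..n. \<bar>x1 i\<bar>) = 1"
    proof -
      have "(\<Sum>i=1..n. \<bar>x1 i\<bar>) = (1/s) * s" unfolding x1_def s_def using s
        by (simp add: abs_mult sum_distrib_left)
      then show ?thesis using s by simp
    qed
    ultimately have x1B: "x1 \<in> B" unfolding B_def by auto
    have x1z: "linc n x1 y = 0" unfolding x1_def linc_scale x0 by simp
    show "\<forall>j::nat. \<exists>x\<in>D. norm (linc n x y) < inverse (real (Suc j))"
    proof
      fix j :: nat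
      define V where "V = {x. norm (linc n x y) < inverse (real (Suc j))}"
      have "open V" unfolding V_def
        by (intro open_Collect_less continuous_on_norm linc_cont continuous_on_const)
      moreover have "x1 \<in> V \<inter> B" using x1B x1z unfolding V_def by auto
      ultimately have "D \<inter> V \<noteq> {}" using D(3) by blast
      then show "\<exists>x\<in>D. norm (linc n x y) < inverse (real (Suc j))" unfolding V_def by auto
    qed
  next
    assume A: "\<forall>j::nat. \<exists>x\<in>D. norm (linc n x y) < inverse (real (Suc j))"
    then obtain X where X: "\<And>j. X j \<in> D" "\<And>j. norm (linc n (X j) y) < inverse (real (Suc j))"
      by metis
    have XB: "X j \<in> B" for j using X D by auto
    have XK: "X j \<in> K" for j using XB unfolding B_def by auto
    have bnd: "\<bar>X j i\<bar> \<le> 1" if "i \<in> {1..n}" for j i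
    proof -
      have "\<bar>X j i\<bar> \<le> (\<Sum>i=1..n. \<bar>X j i\<bar>)" using that by (intro member_le_sum) auto
      then show ?thesis using XB[of j] unfolding B_def by auto
    qed
    obtain r where r: "strict_mono r" "\<forall>i\<in>{1..n}. \<exists>l. (\<lambda>j. X (r j) i) \<longlonglongrightarrow> l"
      using subseq_coords[of "{1..n}" X 1] bnd by auto
    define x where "x = (\<lambda>i. if i \<in> {1..n} then lim (\<lambda>j. X (r j) i) else 0)"
    have conv: "(\<lambda>j. X (r j) i) \<longlonglongrightarrow> x i" for i
    proof (cases "i \<in> {1..n}")
      case True
      then show ?thesis using r(2) unfolding x_def by (auto simp: convergent_LIMSEQ_iff[symmetric] convergent_def)
    next
      case False
      then have "X (r j) i = 0" for j using XK KR unfolding Rn_def by blast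
      then show ?thesis using False unfolding x_def by simp
    qed
    have xK: "x \<in> K" using sc unfolding seqcl_def
      by (elim allE[of _ "\<lambda>j. X (r j)"] allE[of _ x]) (use XK conv in blast)
    have "(\<lambda>j. \<Sum>i=1..n. \<bar>X (r j) i\<bar>) \<longlonglongrightarrow> (\<Sum>i=1..n. \<bar>x i\<bar>)"
      by (intro tendsto_sum tendsto_rabs conv)
    moreover have "(\<lambda>j. \<Sum>i=1..n. \<bar>X (r j) i\<bar>) = (\<lambda>j. 1)" using XB unfolding B_def by auto
    ultimately have "(\<Sum>i=1..n. \<bar>x i\<bar>) = 1" using LIMSEQ_unique tendsto_const by metis
    then have xnz: "x \<noteq> (\<lambda>_. 0)" by auto
    have l1: "(\<lambda>j. linc n (X (r j)) y) \<longlonglongrightarrow> linc n x y"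
      unfolding linc_def by (intro tendsto_sum tendsto_scaleR conv tendsto_const)
    have "norm (linc n (X (r j)) y) \<le> inverse (real (Suc j))" for j
    proof -
      have "j \<le> r j" using seq_suble[OF r(1)] .
      then have "inverse (real (Suc (r j))) \<le> inverse (real (Suc j))" by (simp add: le_imp_inverse_le)
      then show ?thesis using X(2)[of "r j"] by linarith
    qed
    then have "(\<lambda>j. linc n (X (r j)) y) \<longlonglongrightarrow> 0"
      by (intro Lim_null_comparison[OF _ LIMSEQ_inverse_real_of_nat]) auto
    then have "linc n x y = 0" using l1 LIMSEQ_unique by blast
    then show "y \<in> Ev n K" unfolding Ev_def using xK xnz by auto
  qed
  have base: "{y \<in> space N. norm (linc n x y) < inverse (real (Suc j))} \<in> sets N" for x j
  proof -
    have "(\<lambda>y. norm (linc n x y)) \<in> borel_measurable N" unfolding N_def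
      using measurable_compose[OF linc_meas borel_measurable_norm] by simp
    then show ?thesis by (intro borel_measurable_less) auto
  qed
  have "{y \<in> space N. \<forall>j::nat. \<exists>x\<in>D. norm (linc n x y) < inverse (real (Suc j))} \<in> sets N"
    by (intro sets.sets_Collect_countable_All sets.sets_Collect_countable_Ex' base D(1))
  then show ?thesis using claim unfolding N_def by simp
qed



definition cbar :: "rtype \<Rightarrow> nat \<Rightarrow> (nat \<Rightarrow> real) set" where
  "cbar t n = {x \<in> Rn n. (\<forall>i\<in>{1..<n}. x i \<le> x (Suc i)) \<and>
      (case t of
         TypeA \<Rightarrow> (\<Sum>i=1..n. x i) = 0
       | TypeB \<Rightarrow> 0 \<le> x 1
       | TypeD \<Rightarrow> \<bar>x 1\<bar> \<le> x 2)}"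

lemma seqcl_cbar: "seqcl (cbar t n)"
  unfolding seqcl_def
proof (intro allI impI)
  fix X x assume X: "\<forall>j. X j \<in> cbar t n" and c: "\<forall>i. (\<lambda>j. X j i) \<longlonglongrightarrow> x i"
  have "x \<in> Rn n" unfolding Rn_def
  proof (intro CollectI allI impI)
    fix i assume "i \<notin> {1..n}"
    then have "(\<lambda>j. X j i) = (\<lambda>j. 0)" using X unfolding cbar_def Rn_def by auto
    then have "(\<lambda>j. 0::real) \<longlonglongrightarrow> x i" using c by metis
    then show "x i = 0" using LIMSEQ_const_iff by metis
  qed
  moreover have "x i \<le> x (Suc i)" if "i \<in> {1..<n}" for i
    using c that X unfolding cbar_def by (intro LIMSEQ_le[of "\<lambda>j. X j i" _ "\<lambda>j. X j (Suc i)"]) auto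
  moreover have "case t of
         TypeA \<Rightarrow> (\<Sum>i=1..n. x i) = 0
       | TypeB \<Rightarrow> 0 \<le> x 1
       | TypeD \<Rightarrow> \<bar>x 1\<bar> \<le> x 2"
  proof (cases t)
    case TypeA
    have l: "(\<lambda>j. \<Sum>i=1..n. X j i) \<longlonglongrightarrow> (\<Sum>i=1..n. x i)" by (intro tendsto_sum) (use c in auto)
    have e: "(\<lambda>j. \<Sum>i=1..n. X j i) = (\<lambda>j. 0)" using X TypeA unfolding cbar_def by auto
    from l have "(\<lambda>j. 0::real) \<longlonglongrightarrow> (\<Sum>i=1..n. x i)" unfolding e .
    then have "(\<Sum>i=1..n. x i) = 0" using LIMSEQ_const_iff by metis
    then show ?thesis using TypeA by simp
  next
    case TypeB
    then show ?thesis using X c unfolding cbar_def by (auto intro!: LIMSEQ_le_const[of "\<lambda>j. X j 1"])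
  next
    case TypeD
    have "(\<lambda>j. \<bar>X j 1\<bar>) \<longlonglongrightarrow> \<bar>x 1\<bar>" by (intro tendsto_rabs) (use c in auto)
    then show ?thesis using X c TypeD unfolding cbar_def
      by (auto intro!: LIMSEQ_le[of "\<lambda>j. \<bar>X j 1\<bar>" _ "\<lambda>j. X j 2"])
  qed
  ultimately show "x \<in> cbar t n" unfolding cbar_def by auto
qed

lemma chamber_sub: "t = TypeD \<longrightarrow> 2 \<le> n \<Longrightarrow> chamber t n \<subseteq> cbar t n"
  unfolding chamber_def cbar_def by (cases t) (auto simp: less_imp_le)

lemma cbar_sub_closure:
  assumes "1 \<le> n" "t = TypeD \<longrightarrow> 2 \<le> n" "x \<in> cbar t n"
  shows "x \<in> closure (chamber t n)"
proof -
  define w :: "nat \<Rightarrow> real" where "w = (\<lambda>i. if i \<in> {1..n} then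
      (case t of TypeA \<Rightarrow> real i - (\<Sum>k=1..n. real k) / real n
        | TypeB \<Rightarrow> real i
        | TypeD \<Rightarrow> (if i = 1 \<and> x 1 < 0 then -1 else real i)) else 0)"
  define F where "F = (\<lambda>s::real. \<lambda>i. x i + s * w i)"
  have cF: "continuous_on UNIV F" unfolding F_def
    by (intro continuous_on_coordinatewise_then_product continuous_intros)
  have xR: "x \<in> Rn n" and mono: "\<And>i. i \<in> {1..<n} \<Longrightarrow> x i \<le> x (Suc i)"
    using assms(3) unfolding cbar_def by auto
  have inC: "F s \<in> chamber t n" if s: "0 < s" for s
  proof -
    have R: "F s \<in> Rn n" using xR unfolding F_def w_def Rn_def by auto
    have wm: "w i < w (Suc i)" if "i \<in> {1..<n}" for i
      using that unfolding w_def by (cases t) auto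
    have st: "F s i < F s (Suc i)" if "i \<in> {1..<n}" for i
      using mono[OF that] wm[OF that] s unfolding F_def
      by (simp add: add_le_less_mono mult_strict_left_mono)
    have "case t of
         TypeA \<Rightarrow> (\<Sum>i=1..n. F s i) = 0
       | TypeB \<Rightarrow> 0 < F s 1
       | TypeD \<Rightarrow> 0 < \<bar>F s 1\<bar> \<and> (n \<ge> 2 \<longrightarrow> \<bar>F s 1\<bar> < F s 2)"
    proof (cases t)
      case TypeA
      have "(\<Sum>i=1..n. w i) = (\<Sum>i=1..n. real i) - real n * ((\<Sum>k=1..n. real k) / real n)"
        unfolding w_def using TypeA by (simp add: sum_subtractf)
      also have "\<dots> = 0" using assms(1) by simp
      finally have "(\<Sum>i=1..n. w i) = 0" .
      moreover have "(\<Sum>i=1..n. x i) = 0" using assms(3) TypeA unfolding cbar_def by auto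
      ultimately show ?thesis using TypeA unfolding F_def
        by (simp add: sum.distrib sum_distrib_left[symmetric])
    next
      case TypeB
      then show ?thesis using assms s unfolding F_def w_def cbar_def by auto
    next
      case TypeD
      have "\<bar>x 1\<bar> \<le> x 2" using assms(3) TypeD unfolding cbar_def by auto
      then show ?thesis using assms s TypeD unfolding F_def w_def by (auto simp: abs_if)
    qed
    then show ?thesis using R st unfolding chamber_def by (cases t) auto
  qed
  have "(\<lambda>j. F (inverse (real (Suc j)))) \<longlonglongrightarrow> F 0"
    by (intro continuous_on_tendsto_compose[OF cF LIMSEQ_inverse_real_of_nat]) auto
  moreover have "F 0 = x" unfolding F_def by simp
  ultimately show ?thesis unfolding closure_sequential using inC
    by (intro exI[of _ "\<lambda>j. F (inverse (real (Suc j)))"]) auto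
qed

lemma closure_chamber:
  assumes "1 \<le> n" "t = TypeD \<longrightarrow> 2 \<le> n"
  shows "closure (chamber t n) = cbar t n"
proof
  show "closure (chamber t n) \<subseteq> cbar t n"
    using closure_minimal[OF chamber_sub[OF assms(2)] seqcl_closed[OF seqcl_cbar]] .
  show "cbar t n \<subseteq> closure (chamber t n)" using cbar_sub_closure[OF assms] by blast
qed



lemma gmap_at:
  assumes "\<sigma> permutes {1..n}" "i \<in> {1..n}"
  shows "gmap n \<sigma> \<epsilon> z (\<sigma> i) = \<epsilon> i * z i"
proof -
  have "\<sigma> i \<in> {1..n}" using assms(2) by (rule iffD2[OF permutes_in_image[OF assms(1)]])
  moreover have "inv_into {1..n} \<sigma> (\<sigma> i) = i"
    using assms permutes_inj_on inv_into_f_f by metis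
  ultimately show ?thesis unfolding gmap_def by simp
qed

lemma gmap_Rn: "gmap n \<sigma> \<epsilon> z \<in> Rn n"
  unfolding gmap_def Rn_def by auto

lemma gmap_zero:
  assumes "\<sigma> permutes {1..n}" "\<forall>i\<in>{1..n}. \<epsilon> i \<in> {-1,1}" "z \<in> Rn n"
  shows "gmap n \<sigma> \<epsilon> z = (\<lambda>_. 0) \<longleftrightarrow> z = (\<lambda>_. 0)"
proof
  assume g: "gmap n \<sigma> \<epsilon> z = (\<lambda>_. 0)"
  show "z = (\<lambda>_. 0)"
  proof
    fix i show "z i = 0"
    proof (cases "i \<in> {1..n}")
      case True
      then have "\<epsilon> i * z i = 0" using gmap_at[OF assms(1) True, of \<epsilon> z] g by simp
      moreover have "\<epsilon> i \<in> {-1,1}" using assms(2) True by blast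
      then have "\<epsilon> i \<noteq> 0" by auto
      ultimately show ?thesis by simp
    next
      case False then show ?thesis using assms(3) unfolding Rn_def by auto
    qed
  qed
next
  assume "z = (\<lambda>_. 0)" then show "gmap n \<sigma> \<epsilon> z = (\<lambda>_. 0)" unfolding gmap_def by auto
qed

lemma gmap_sum:
  fixes y :: "nat \<Rightarrow> 'a::real_vector"
  assumes "\<sigma> permutes {1..n}"
  shows "(\<Sum>j=1..n. gmap n \<sigma> \<epsilon> z j *\<^sub>R y j) = (\<Sum>i=1..n. z i *\<^sub>R (\<epsilon> i *\<^sub>R y (\<sigma> i)))"
proof -
  have "(\<Sum>j=1..n. gmap n \<sigma> \<epsilon> z j *\<^sub>R y j) = (\<Sum>i=1..n. gmap n \<sigma> \<epsilon> z (\<sigma> i) *\<^sub>R y (\<sigma> i))"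
    using sum.reindex_bij_betw[OF permutes_imp_bij[OF assms], of "\<lambda>j. gmap n \<sigma> \<epsilon> z j *\<^sub>R y j"]
    by simp
  also have "\<dots> = (\<Sum>i=1..n. z i *\<^sub>R (\<epsilon> i *\<^sub>R y (\<sigma> i)))"
  proof (intro sum.cong refl)
    fix i assume i: "i \<in> {1..n}"
    have "gmap n \<sigma> \<epsilon> z (\<sigma> i) *\<^sub>R y (\<sigma> i) = (\<epsilon> i * z i) *\<^sub>R y (\<sigma> i)"
      using gmap_at[OF assms i] by simp
    also have "\<dots> = z i *\<^sub>R (\<epsilon> i *\<^sub>R y (\<sigma> i))" by (simp add: mult.commute)
    finally show "gmap n \<sigma> \<epsilon> z (\<sigma> i) *\<^sub>R y (\<sigma> i) = z i *\<^sub>R (\<epsilon> i *\<^sub>R y (\<sigma> i))" .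
  qed
  finally show ?thesis .
qed

lemma linc_restrict: "linc n z (restrict f {1..n}) = linc n z f"
  unfolding linc_def by (intro sum.cong) auto

lemma linc_restrict': "linc n z (restrict f {Suc 0..n}) = linc n z f"
  unfolding linc_def by (intro sum.cong) auto

lemma event_eq:
  assumes "\<sigma> permutes {1..n}" "\<forall>i\<in>{1..n}. \<epsilon> i \<in> {-1,1}" "Kc \<subseteq> Rn n" "(\<lambda>_. 0) \<in> Kc"
  shows "(kerA n \<xi> \<omega> \<inter> gmap n \<sigma> \<epsilon> ` Kc \<noteq> {\<lambda>_. 0}) \<longleftrightarrow>
         (restrict (\<lambda>i. \<epsilon> i *\<^sub>R \<xi> (\<sigma> i) \<omega>) {1..n} \<in> Ev n Kc)"
proof -
  have z0: "(\<lambda>_. 0) \<in> kerA n \<xi> \<omega> \<inter> gmap n \<sigma> \<epsilon> ` Kc"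
  proof -
    have "gmap n \<sigma> \<epsilon> (\<lambda>_. 0) = (\<lambda>_. 0)" unfolding gmap_def by auto
    then have "(\<lambda>_. 0) \<in> gmap n \<sigma> \<epsilon> ` Kc" using assms(4) by (metis image_eqI)
    moreover have "(\<lambda>_. 0::real) \<in> kerA n \<xi> \<omega>" unfolding kerA_def Rn_def by auto
    ultimately show ?thesis by auto
  qed
  have "(kerA n \<xi> \<omega> \<inter> gmap n \<sigma> \<epsilon> ` Kc \<noteq> {\<lambda>_. 0}) \<longleftrightarrow>
        (\<exists>z\<in>Kc. gmap n \<sigma> \<epsilon> z \<noteq> (\<lambda>_. 0) \<and> gmap n \<sigma> \<epsilon> z \<in> kerA n \<xi> \<omega>)"
    using z0 by blast
  also have "\<dots> \<longleftrightarrow> (\<exists>z\<in>Kc. z \<noteq> (\<lambda>_. 0) \<and> linc n z (\<lambda>i. \<epsilon> i *\<^sub>R \<xi> (\<sigma> i) \<omega>) = 0)"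
  proof (intro bex_cong refl conj_cong)
    fix z assume "z \<in> Kc"
    then have "z \<in> Rn n" using assms(3) by auto
    then show "(gmap n \<sigma> \<epsilon> z \<noteq> (\<lambda>_. 0)) = (z \<noteq> (\<lambda>_. 0))" using gmap_zero assms by blast
    show "(gmap n \<sigma> \<epsilon> z \<in> kerA n \<xi> \<omega>) = (linc n z (\<lambda>i. \<epsilon> i *\<^sub>R \<xi> (\<sigma> i) \<omega>) = 0)"
      using gmap_Rn gmap_sum[OF assms(1), of \<epsilon> z "\<lambda>i. \<xi> i \<omega>"] unfolding kerA_def linc_def
      by (simp add: scaleR_scaleR)
  qed
  finally show ?thesis unfolding Ev_def by (simp add: linc_restrict')
qed

lemma law_eq:
  fixes \<xi> :: "nat \<Rightarrow> 'w \<Rightarrow> real^'d"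
  assumes meas: "\<forall>i\<in>{1..n}. \<xi> i \<in> borel_measurable M" and sig: "\<sigma> permutes {1..n}"
    and E: "E \<in> sets (PiM {1..n} (\<lambda>_. borel :: (real^'d) measure))"
    and jl: "joint_law M n \<xi> = joint_law M n (\<lambda>i \<omega>. \<epsilon> i *\<^sub>R \<xi> (\<sigma> i) \<omega>)"
  shows "measure M {\<omega>\<in>space M. restrict (\<lambda>i. \<epsilon> i *\<^sub>R \<xi> (\<sigma> i) \<omega>) {1..n} \<in> E}
       = measure M {\<omega>\<in>space M. restrict (\<lambda>i. \<xi> i \<omega>) {1..n} \<in> E}"
proof -
  define N where "N = PiM {1..n} (\<lambda>_. borel :: (real^'d) measure)"
  have m1: "(\<lambda>\<omega>. restrict (\<lambda>i. \<xi> i \<omega>) {1..n}) \<in> measurable M N"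
    unfolding N_def using meas by (intro measurable_restrict) simp
  have m2: "(\<lambda>\<omega>. restrict (\<lambda>i. \<epsilon> i *\<^sub>R \<xi> (\<sigma> i) \<omega>) {1..n}) \<in> measurable M N"
    unfolding N_def
  proof (rule measurable_restrict)
    fix i :: nat assume "i \<in> {1..n}"
    then have "\<sigma> i \<in> {1..n}" by (rule iffD2[OF permutes_in_image[OF sig]])
    then have "\<xi> (\<sigma> i) \<in> borel_measurable M" using meas by auto
    then show "(\<lambda>\<omega>. \<epsilon> i *\<^sub>R \<xi> (\<sigma> i) \<omega>) \<in> borel_measurable M"
      by (rule borel_measurable_scaleR[OF borel_measurable_const])
  qed
  have "measure M {\<omega>\<in>space M. restrict (\<lambda>i. \<epsilon> i *\<^sub>R \<xi> (\<sigma> i) \<omega>) {1..n} \<in> E}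
      = measure (joint_law M n (\<lambda>i \<omega>. \<epsilon> i *\<^sub>R \<xi> (\<sigma> i) \<omega>)) E"
    unfolding joint_law_def using measure_distr[OF m2 E[folded N_def]] unfolding N_def
    by (simp add: vimage_def Int_def conj_commute)
  also have "\<dots> = measure (joint_law M n \<xi>) E" using jl by simp
  also have "\<dots> = measure M {\<omega>\<in>space M. restrict (\<lambda>i. \<xi> i \<omega>) {1..n} \<in> E}"
    unfolding joint_law_def using measure_distr[OF m1 E[folded N_def]] unfolding N_def
    by (simp add: vimage_def Int_def conj_commute)
  finally show ?thesis .
qed



lemma hull_idx:
  fixes f :: "nat \<Rightarrow> 'a::real_vector"
  assumes "finite I"
  shows "0 \<in> convex hull (f ` I) \<longleftrightarrow> (\<exists>u. (\<forall>i\<in>I. 0 \<le> u i) \<and> sum u I = 1 \<and> (\<Sum>i\<in>I. u i *\<^sub>R f i) = 0)"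
proof
  assume "0 \<in> convex hull (f ` I)"
  then obtain w where w: "\<forall>y\<in>f`I. 0 \<le> w y" "sum w (f`I) = 1" "(\<Sum>y\<in>f`I. w y *\<^sub>R y) = 0"
    using convex_hull_finite[of "f ` I"] assms by auto
  define c where "c = (\<lambda>i. card {j\<in>I. f j = f i})"
  have cpos: "0 < c i" if "i \<in> I" for i
    unfolding c_def using that assms by (auto simp: card_gt_0_iff)
  define u where "u = (\<lambda>i. w (f i) / real (c i))"
  have inner: "(\<Sum>i\<in>{j\<in>I. f j = y}. g (f i) / real (c i)) = g y" if "y \<in> f ` I" for y and g :: "'a \<Rightarrow> real"
  proof -
    have "(\<Sum>i\<in>{j\<in>I. f j = y}. g (f i) / real (c i)) = (\<Sum>i\<in>{j\<in>I. f j = y}. g y / real (card {j\<in>I. f j = y}))"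
      unfolding c_def by (intro sum.cong) auto
    also have "\<dots> = g y" using that assms by (auto simp: card_gt_0_iff)
    finally show ?thesis .
  qed
  have "(\<forall>i\<in>I. 0 \<le> u i)" unfolding u_def using w(1) by auto
  moreover have "sum u I = 1"
  proof -
    have "sum u I = (\<Sum>y\<in>f`I. \<Sum>i\<in>{j\<in>I. f j = y}. u i)" using sum.image_gen[OF assms] by blast
    also have "\<dots> = (\<Sum>y\<in>f`I. w y)"
      by (intro sum.cong refl) (use inner[of _ w] in \<open>auto simp: u_def\<close>)
    finally show ?thesis using w(2) by simp
  qed
  moreover have "(\<Sum>i\<in>I. u i *\<^sub>R f i) = 0"
  proof -
    have "(\<Sum>i\<in>I. u i *\<^sub>R f i) = (\<Sum>y\<in>f`I. \<Sum>i\<in>{j\<in>I. f j = y}. u i *\<^sub>R f i)" using sum.image_gen[OF assms] by blast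
    also have "\<dots> = (\<Sum>y\<in>f`I. w y *\<^sub>R y)"
    proof (intro sum.cong refl)
      fix y assume y: "y \<in> f ` I"
      have "(\<Sum>i\<in>{j\<in>I. f j = y}. u i *\<^sub>R f i) = (\<Sum>i\<in>{j\<in>I. f j = y}. (w (f i) *\<^sub>R f i) /\<^sub>R real (c i))"
        unfolding u_def by (intro sum.cong) (auto simp: divide_inverse_commute)
      also have "\<dots> = w y *\<^sub>R y"
      proof -
        have "(\<Sum>i\<in>{j\<in>I. f j = y}. (w (f i) *\<^sub>R f i) /\<^sub>R real (c i)) = (\<Sum>i\<in>{j\<in>I. f j = y}. (w y *\<^sub>R y) /\<^sub>R real (card {j\<in>I. f j = y}))"
          unfolding c_def by (intro sum.cong) auto
        also have "\<dots> = real (card {j\<in>I. f j = y}) *\<^sub>R ((w y *\<^sub>R y) /\<^sub>R real (card {j\<in>I. f j = y}))"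
          by (rule sum_constant_scaleR)
        also have "\<dots> = w y *\<^sub>R y"
        proof -
          have "card {j\<in>I. f j = y} > 0" using y assms by (auto simp: card_gt_0_iff)
          then show ?thesis by simp
        qed
        finally show ?thesis .
      qed
      finally show "(\<Sum>i\<in>{j\<in>I. f j = y}. u i *\<^sub>R f i) = w y *\<^sub>R y" .
    qed
    finally show ?thesis using w(3) by simp
  qed
  ultimately show "\<exists>u. (\<forall>i\<in>I. 0 \<le> u i) \<and> sum u I = 1 \<and> (\<Sum>i\<in>I. u i *\<^sub>R f i) = 0" by blast
next
  assume "\<exists>u. (\<forall>i\<in>I. 0 \<le> u i) \<and> sum u I = 1 \<and> (\<Sum>i\<in>I. u i *\<^sub>R f i) = 0"
  then obtain u where u: "\<forall>i\<in>I. 0 \<le> u i" "sum u I = 1" "(\<Sum>i\<in>I. u i *\<^sub>R f i) = 0" by blast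
  have "(\<Sum>i\<in>I. u i *\<^sub>R f i) \<in> convex hull (f ` I)"
    by (rule convex_sum[OF assms convex_convex_hull u(2)]) (use u(1) in \<open>auto intro: hull_inc\<close>)
  then show "0 \<in> convex hull (f ` I)" using u(3) by simp
qed



lemma abel:
  fixes v :: "nat \<Rightarrow> 'a::real_vector"
  shows "(\<Sum>k=1..m. u k *\<^sub>R (\<Sum>i=1..k. v i)) = (\<Sum>i=1..m. (\<Sum>k=i..m. u k) *\<^sub>R v i)"
proof (induction m)
  case 0 then show ?case by simp
next
  case (Suc m)
  have "(\<Sum>i=1..Suc m. (\<Sum>k=i..Suc m. u k) *\<^sub>R v i)
      = (\<Sum>i=1..m. (\<Sum>k=i..Suc m. u k) *\<^sub>R v i) + u (Suc m) *\<^sub>R v (Suc m)"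
    by simp
  also have "(\<Sum>i=1..m. (\<Sum>k=i..Suc m. u k) *\<^sub>R v i) = (\<Sum>i=1..m. (\<Sum>k=i..m. u k) *\<^sub>R v i + u (Suc m) *\<^sub>R v i)"
    by (intro sum.cong refl) (auto simp: scaleR_add_left)
  also have "\<dots> = (\<Sum>i=1..m. (\<Sum>k=i..m. u k) *\<^sub>R v i) + u (Suc m) *\<^sub>R (\<Sum>i=1..m. v i)"
    by (simp add: sum.distrib scaleR_sum_right)
  finally show ?case using Suc by (simp add: scaleR_add_right)
qed

lemma sum_last:
  fixes n :: nat
  assumes "1 \<le> n" shows "(\<Sum>i=1..n. g i) = (\<Sum>i=1..n-1. g i) + (g n :: 'a::comm_monoid_add)"
proof -
  obtain m where "n = Suc m" using assms by (cases n) auto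
  then show ?thesis by (simp add: sum.cl_ivl_Suc)
qed

definition tls :: "nat \<Rightarrow> (nat \<Rightarrow> real) \<Rightarrow> (nat \<Rightarrow> real)" where
  "tls n u = (\<lambda>i. if i \<in> {1..n} then (\<Sum>k=i..n. u k) else 0)"

lemma tl_Rn: "tls n u \<in> Rn n" unfolding tls_def Rn_def by auto

lemma linc_tl: "linc n (tls n u) v = (\<Sum>k=1..n. u k *\<^sub>R (\<Sum>i=1..k. v i))"
  unfolding abel linc_def tls_def by (intro sum.cong) auto

lemma tl_step: "i \<in> {1..<n} \<Longrightarrow> tls n u i = u i + tls n u (Suc i)"
  unfolding tls_def by (auto simp: sum.atLeast_Suc_atMost)

lemma tl_last: "1 \<le> n \<Longrightarrow> tls n u n = u n" unfolding tls_def by auto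

lemma tl_first: "1 \<le> n \<Longrightarrow> tls n u 1 = sum u {1..n}" unfolding tls_def by auto

lemma tl_diff:
  assumes "x \<in> Rn n" shows "tls n (\<lambda>k. x k - x (Suc k)) = x"
proof
  fix i show "tls n (\<lambda>k. x k - x (Suc k)) i = x i"
  proof (cases "i \<in> {1..n}")
    case True
    have "(\<Sum>k=i..n. x k - x (Suc k)) = - (\<Sum>k=i..n. x (Suc k) - x k)"
      by (simp add: sum_negf[symmetric])
    also have "\<dots> = x i - x (Suc n)" using True by (subst sum_Suc_diff) auto
    also have "x (Suc n) = 0" using assms unfolding Rn_def by auto
    finally show ?thesis using True unfolding tls_def by simp
  next
    case False then show ?thesis using assms unfolding tls_def Rn_def by auto
  qed
qed

lemma tl_scale: "tls n (\<lambda>k. u k / c) = (\<lambda>i. tls n u i / c)"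
  unfolding tls_def by (auto simp: sum_divide_distrib)

lemma mono_chain:
  assumes "\<forall>i\<in>{1..<n}. x (Suc i) \<le> (x i :: real)" "1 \<le> i" "i \<le> j" "j \<le> n"
  shows "x j \<le> x i"
  using assms(3,4)
proof (induction j)
  case 0 then show ?case using assms(2) by simp
next
  case (Suc j)
  show ?case
  proof (cases "i = Suc j")
    case True then show ?thesis by simp
  next
    case False
    then have "i \<le> j" using Suc by auto
    then have "x j \<le> x i" "x (Suc j) \<le> x j" using Suc assms(1,2) by auto
    then show ?thesis by simp
  qed
qed

definition KB :: "nat \<Rightarrow> (nat \<Rightarrow> real) set" where
  "KB n = {x \<in> Rn n. (\<forall>i\<in>{1..<n}. x (Suc i) \<le> x i) \<and> 0 \<le> x n}"

definition KA :: "nat \<Rightarrow> (nat \<Rightarrow> real) set" where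
  "KA n = {x \<in> Rn n. (\<forall>i\<in>{1..<n}. x (Suc i) \<le> x i) \<and> x n = 0}"

lemma u_to_K:
  assumes "1 \<le> n" "\<forall>k\<in>{1..n}. 0 \<le> u k" "sum u {1..n} = 1"
    "(\<Sum>k=1..n. u k *\<^sub>R (\<Sum>i=1..k. v i)) = 0"
  shows "tls n u \<in> KB n" "tls n u \<noteq> (\<lambda>_. 0)" "linc n (tls n u) v = 0" "tls n u n = u n"
proof -
  show "tls n u \<in> KB n" unfolding KB_def using tl_Rn tl_step tl_last assms by fastforce
  show "tls n u \<noteq> (\<lambda>_. 0)" using tl_first[OF assms(1), of u] assms(3) by (metis zero_neq_one)
  show "linc n (tls n u) v = 0" using linc_tl assms(4) by metis
  show "tls n u n = u n" using tl_last assms(1) .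
qed

lemma KB_pos:
  assumes "x \<in> KB n" "x \<noteq> (\<lambda>_. 0)"
  shows "0 < x 1"
proof -
  have xR: "x \<in> Rn n" and m: "\<forall>i\<in>{1..<n}. x (Suc i) \<le> x i" and l: "0 \<le> x n"
    using assms(1) unfolding KB_def by auto
  obtain i where i: "x i \<noteq> 0" using assms(2) by auto
  then have iR: "i \<in> {1..n}" using xR unfolding Rn_def by auto
  have "x n \<le> x i" using mono_chain[OF m, of i n] iR by auto
  then have "0 < x i" using l i by auto
  moreover have "x i \<le> x 1" using mono_chain[OF m, of 1 i] iR by auto
  ultimately show ?thesis by simp
qed

lemma K_to_u:
  assumes "1 \<le> n" "x \<in> KB n" "x \<noteq> (\<lambda>_. 0)" "linc n x v = 0"
  defines "u \<equiv> (\<lambda>k. (x k - x (Suc k)) / x 1)"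
  shows "\<forall>k\<in>{1..n}. 0 \<le> u k" "sum u {1..n} = 1"
    "(\<Sum>k=1..n. u k *\<^sub>R (\<Sum>i=1..k. v i)) = 0" "u n = x n / x 1"
proof -
  have c: "0 < x 1" using KB_pos assms by blast
  have xR: "x \<in> Rn n" and m: "\<forall>i\<in>{1..<n}. x (Suc i) \<le> x i" and l: "0 \<le> x n"
    using assms(2) unfolding KB_def by auto
  have xS: "x (Suc n) = 0" using xR unfolding Rn_def by auto
  show "\<forall>k\<in>{1..n}. 0 \<le> u k"
  proof
    fix k assume k: "k \<in> {1..n}"
    show "0 \<le> u k"
    proof (cases "k = n")
      case True then show ?thesis using l xS c unfolding u_def by simp
    next
      case False then have "x (Suc k) \<le> x k" using m k by auto
      then show ?thesis using c unfolding u_def by simp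
    qed
  qed
  have tu: "tls n u = (\<lambda>i. x i / x 1)" unfolding u_def tl_scale tl_diff[OF xR] ..
  show "sum u {1..n} = 1" using tl_first[OF assms(1), of u] c unfolding tu by simp
  have "(\<Sum>k=1..n. u k *\<^sub>R (\<Sum>i=1..k. v i)) = linc n (\<lambda>i. (1 / x 1) * x i) v"
    unfolding linc_tl[symmetric] tu by simp
  also have "\<dots> = 0" unfolding linc_scale assms(4) by simp
  finally show "(\<Sum>k=1..n. u k *\<^sub>R (\<Sum>i=1..k. v i)) = 0" .
  show "u n = x n / x 1" unfolding u_def xS by simp
qed

lemma hullB:
  fixes v :: "nat \<Rightarrow> 'a::real_vector"
  assumes "1 \<le> n"
  shows "0 \<in> convex hull ((\<lambda>k. \<Sum>i=1..k. v i) ` {1..n}) \<longleftrightarrow> (\<exists>x\<in>KB n. x \<noteq> (\<lambda>_. 0) \<and> linc n x v = 0)"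
  unfolding hull_idx[OF finite_atLeastAtMost]
proof
  assume "\<exists>u. (\<forall>i\<in>{1..n}. 0 \<le> u i) \<and> sum u {1..n} = 1 \<and> (\<Sum>i=1..n. u i *\<^sub>R (\<Sum>i=1..i. v i)) = 0"
  then obtain u where "\<forall>i\<in>{1..n}. 0 \<le> u i" "sum u {1..n} = 1" "(\<Sum>i=1..n. u i *\<^sub>R (\<Sum>i=1..i. v i)) = 0"
    by blast
  from u_to_K[OF assms this] show "\<exists>x\<in>KB n. x \<noteq> (\<lambda>_. 0) \<and> linc n x v = 0" by blast
next
  assume "\<exists>x\<in>KB n. x \<noteq> (\<lambda>_. 0) \<and> linc n x v = 0"
  then obtain x where "x \<in> KB n" "x \<noteq> (\<lambda>_. 0)" "linc n x v = 0" by blast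
  note U = K_to_u[OF assms this]
  show "\<exists>u. (\<forall>i\<in>{1..n}. 0 \<le> u i) \<and> sum u {1..n} = 1 \<and> (\<Sum>i=1..n. u i *\<^sub>R (\<Sum>i=1..i. v i)) = 0"
    apply (intro exI[of _ "\<lambda>k. (x k - x (Suc k)) / x 1"] conjI)
    using U(1-3) by blast+
qed

lemma hullA:
  fixes v :: "nat \<Rightarrow> 'a::real_vector"
  assumes "2 \<le> n"
  shows "0 \<in> convex hull ((\<lambda>k. \<Sum>i=1..k. v i) ` {1..n-1}) \<longleftrightarrow> (\<exists>x\<in>KA n. x \<noteq> (\<lambda>_. 0) \<and> linc n x v = 0)"
  unfolding hull_idx[OF finite_atLeastAtMost]
proof
  have split: "{1..n} = insert n {1..n-1}" using assms by auto
  assume "\<exists>u. (\<forall>i\<in>{1..n-1}. 0 \<le> u i) \<and> sum u {1..n-1} = 1 \<and> (\<Sum>i=1..n-1. u i *\<^sub>R (\<Sum>i=1..i. v i)) = 0"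
  then obtain u where u: "\<forall>i\<in>{1..n-1}. 0 \<le> u i" "sum u {1..n-1} = 1" "(\<Sum>i=1..n-1. u i *\<^sub>R (\<Sum>i=1..i. v i)) = 0"
    by blast
  define u' where "u' = u(n := 0)"
  have "\<forall>i\<in>{1..n}. 0 \<le> u' i" using u(1) unfolding u'_def split by auto
  moreover have "sum u' {1..n} = 1"
  proof -
    have "sum u' {1..n-1} = sum u {1..n-1}" by (intro sum.cong) (auto simp: u'_def)
    moreover have "sum u' {1..n} = sum u' {1..n-1} + u' n" unfolding split by (subst sum.insert) auto
    ultimately show ?thesis using u(2) by (simp add: u'_def)
  qed
  moreover have "(\<Sum>i=1..n. u' i *\<^sub>R (\<Sum>i=1..i. v i)) = 0"
  proof -
    have "(\<Sum>i=1..n. u' i *\<^sub>R (\<Sum>i=1..i. v i)) = (\<Sum>i=1..n-1. u i *\<^sub>R (\<Sum>i=1..i. v i))"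
    proof -
      have "(\<Sum>i=1..n. u' i *\<^sub>R (\<Sum>i=1..i. v i)) = (\<Sum>i=1..n-1. u' i *\<^sub>R (\<Sum>i=1..i. v i)) + u' n *\<^sub>R (\<Sum>i=1..n. v i)"
        using sum_last[of n "\<lambda>i. u' i *\<^sub>R (\<Sum>i=1..i. v i)"] assms by simp
      also have "(\<Sum>i=1..n-1. u' i *\<^sub>R (\<Sum>i=1..i. v i)) = (\<Sum>i=1..n-1. u i *\<^sub>R (\<Sum>i=1..i. v i))"
        by (intro sum.cong) (auto simp: u'_def)
      finally show ?thesis by (simp add: u'_def)
    qed
    then show ?thesis using u(3) by simp
  qed
  ultimately have "\<forall>i\<in>{1..n}. 0 \<le> u' i" "sum u' {1..n} = 1" "(\<Sum>i=1..n. u' i *\<^sub>R (\<Sum>i=1..i. v i)) = 0"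
    by blast+
  note U = u_to_K[OF _ this]
  have "u' n = 0" by (simp add: u'_def)
  then have "tls n u' \<in> KA n" using U(1,4) assms unfolding KA_def KB_def by auto
  then show "\<exists>x\<in>KA n. x \<noteq> (\<lambda>_. 0) \<and> linc n x v = 0" using U(2,3) assms by auto
next
  have split: "{1..n} = insert n {1..n-1}" using assms by auto
  assume "\<exists>x\<in>KA n. x \<noteq> (\<lambda>_. 0) \<and> linc n x v = 0"
  then obtain x where x: "x \<in> KA n" "x \<noteq> (\<lambda>_. 0)" "linc n x v = 0" by blast
  then have "x \<in> KB n" unfolding KA_def KB_def by auto
  have n1: "1 \<le> n" using assms by simp
  note U = K_to_u[OF n1 \<open>x \<in> KB n\<close> x(2,3)]
  define u where "u = (\<lambda>k. (x k - x (Suc k)) / x 1)"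
  have un: "u n = 0" using U(4) x(1) assms unfolding KA_def u_def by auto
  have "\<forall>i\<in>{1..n-1}. 0 \<le> u i" using U(1) assms unfolding u_def by auto
  moreover have "sum u {1..n-1} = 1"
  proof -
    have "sum u {1..n} = 1" using U(2) by (simp add: u_def)
    then show ?thesis using sum_last[of n u] assms un by simp
  qed
  moreover have "(\<Sum>i=1..n-1. u i *\<^sub>R (\<Sum>i=1..i. v i)) = 0"
  proof -
    have "(\<Sum>k=1..n. u k *\<^sub>R (\<Sum>i=1..k. v i)) = 0" using U(3) by (simp add: u_def)
    then show ?thesis using sum_last[of n "\<lambda>k. u k *\<^sub>R (\<Sum>i=1..k. v i)"] assms un by simp
  qed
  ultimately show "\<exists>u. (\<forall>i\<in>{1..n-1}. 0 \<le> u i) \<and> sum u {1..n-1} = 1 \<and> (\<Sum>i=1..n-1. u i *\<^sub>R (\<Sum>i=1..i. v i)) = 0"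
    by blast
qed



lemma sum_delta_scale:
  fixes f :: "nat \<Rightarrow> 'a::real_vector"
  assumes "m \<in> A" "finite A"
  shows "(\<Sum>k\<in>A. (if k = m then c else 0) *\<^sub>R f k) = c *\<^sub>R f m"
proof -
  have "(\<Sum>k\<in>A. (if k = m then c else 0) *\<^sub>R f k) = (\<Sum>k\<in>A. if k = m then c *\<^sub>R f m else 0)"
    by (intro sum.cong) auto
  then show ?thesis using assms by simp
qed

lemma linc_add_delta:
  fixes v :: "nat \<Rightarrow> 'a::real_vector"
  assumes "m \<in> {1..n}"
  shows "linc n (\<lambda>i. a i + (if i = m then c else 0)) v = linc n a v + c *\<^sub>R v m"
  unfolding linc_def scaleR_add_left sum.distrib using sum_delta_scale[OF assms] by simp

lemma linc_sub_delta:
  fixes v :: "nat \<Rightarrow> 'a::real_vector"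
  assumes "m \<in> {1..n}"
  shows "linc n (\<lambda>i. a i - (if i = m then c else 0)) v = linc n a v - c *\<^sub>R v m"
  unfolding linc_def scaleR_diff_left sum_subtractf using sum_delta_scale[OF assms] by simp

definition KD :: "nat \<Rightarrow> (nat \<Rightarrow> real) set" where
  "KD n = {x \<in> Rn n. (\<forall>i\<in>{1..<n}. x (Suc i) \<le> x i) \<and> \<bar>x n\<bar> \<le> x (n - 1)}"

lemma hullD_fwd:
  fixes v :: "nat \<Rightarrow> 'a::real_vector"
  assumes n2: "2 \<le> n" and u: "\<forall>k\<in>{1..n}. 0 \<le> u k" "0 \<le> \<mu>" "sum u {1..n} + \<mu> = 1"
    and E: "(\<Sum>k=1..n. u k *\<^sub>R (\<Sum>i=1..k. v i)) + \<mu> *\<^sub>R ((\<Sum>i=1..n-1. v i) - v n) = 0"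
  shows "\<exists>x\<in>KD n. x \<noteq> (\<lambda>_. 0) \<and> linc n x v = 0"
proof -
  define S where "S = (\<lambda>k. \<Sum>i=1..k. v i)"
  have m1: "n - 1 \<in> {1..n}" using n2 by auto
  define u' where "u' = (\<lambda>k. u k + (if k = n - 1 then \<mu> else 0))"
  have su': "(\<Sum>k=1..n. u' k *\<^sub>R S k) = (\<Sum>k=1..n. u k *\<^sub>R S k) + \<mu> *\<^sub>R S (n - 1)"
    unfolding u'_def scaleR_add_left sum.distrib using sum_delta_scale[OF m1] by simp
  have E0: "(\<Sum>k=1..n. u k *\<^sub>R S k) + \<mu> *\<^sub>R (S (n - 1) - v n) = 0" using E unfolding S_def .
  have "(\<Sum>k=1..n. u' k *\<^sub>R S k) - \<mu> *\<^sub>R v n = (\<Sum>k=1..n. u k *\<^sub>R S k) + \<mu> *\<^sub>R (S (n - 1) - v n)"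
    unfolding su' by (simp add: scaleR_diff_right algebra_simps)
  then have E': "(\<Sum>k=1..n. u' k *\<^sub>R S k) - \<mu> *\<^sub>R v n = 0" using E0 by simp
  define x where "x = (\<lambda>i. tls n u' i - (if i = n then \<mu> else 0))"
  have nn: "n \<in> {1..n}" using n2 by auto
  have lx: "linc n x v = 0"
    unfolding x_def linc_sub_delta[OF nn] linc_tl using E' unfolding S_def .
  have u'pos: "\<forall>k\<in>{1..n}. 0 \<le> u' k" using u unfolding u'_def by auto
  have xR: "x \<in> Rn n" using tl_Rn[of n u'] nn unfolding x_def Rn_def by auto
  have u'n: "u' n = u n" unfolding u'_def using n2 by auto
  have tn: "tls n u' n = u n" using tl_last[of n u'] n2 u'n by auto
  have tn1: "tls n u' (n - 1) = u (n - 1) + \<mu> + u n"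
    using tl_step[of "n - 1" n u'] n2 tn unfolding u'_def by auto
  have mono: "\<forall>i\<in>{1..<n}. x (Suc i) \<le> x i"
  proof
    fix i assume i: "i \<in> {1..<n}"
    show "x (Suc i) \<le> x i"
    proof (cases "Suc i = n")
      case True
      then have "i = n - 1" by auto
      then show ?thesis unfolding x_def using True tn tn1 u n2 by auto
    next
      case False
      then have "x (Suc i) = tls n u' (Suc i)" "x i = tls n u' i" using i unfolding x_def by auto
      moreover have "tls n u' i = u' i + tls n u' (Suc i)" using tl_step i by blast
      moreover have "0 \<le> u' i" using u'pos i by auto
      ultimately show ?thesis by simp
    qed
  qed
  have "\<bar>x n\<bar> \<le> x (n - 1)"
  proof -
    have "x n = u n - \<mu>" unfolding x_def using tn by simp
    moreover have "x (n - 1) = u (n - 1) + \<mu> + u n" unfolding x_def using tn1 n2 by auto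
    moreover have "0 \<le> u n" "0 \<le> u (n - 1)" using u(1) n2 by auto
    ultimately show ?thesis using u(2) by auto
  qed
  then have xK: "x \<in> KD n" unfolding KD_def using xR mono by auto
  have "x 1 = 1"
  proof -
    have "x 1 = tls n u' 1" unfolding x_def using n2 by auto
    also have "\<dots> = sum u' {1..n}" using tl_first n2 by auto
    also have "\<dots> = sum u {1..n} + \<mu>" unfolding u'_def sum.distrib using m1 by simp
    finally show ?thesis using u(3) by simp
  qed
  then have "x \<noteq> (\<lambda>_. 0)" by auto
  then show ?thesis using xK lx by blast
qed


lemma hullD_bwd:
  fixes v :: "nat \<Rightarrow> 'a::real_vector"
  assumes n2: "2 \<le> n" and xK: "x \<in> KD n" and xnz: "x \<noteq> (\<lambda>_. 0)" and lx: "linc n x v = 0"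
  shows "\<exists>u \<mu>. (\<forall>k\<in>{1..n}. 0 \<le> u k) \<and> 0 \<le> \<mu> \<and> sum u {1..n} + \<mu> = 1 \<and>
    (\<Sum>k=1..n. u k *\<^sub>R (\<Sum>i=1..k. v i)) + \<mu> *\<^sub>R ((\<Sum>i=1..n-1. v i) - v n) = 0"
proof -
  define S where "S = (\<lambda>k. \<Sum>i=1..k. v i)"
  have xR: "x \<in> Rn n" and m: "\<forall>i\<in>{1..<n}. x (Suc i) \<le> x i" and a: "\<bar>x n\<bar> \<le> x (n - 1)"
    using xK unfolding KD_def by auto
  have xS: "x (Suc n) = 0" using xR unfolding Rn_def by auto
  have ge: "x (n - 1) \<le> x i" "x i \<le> x 1" if "i \<in> {1..n-1}" for i
    using mono_chain[OF m, of i "n - 1"] mono_chain[OF m, of 1 i] that n2 by auto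
  have c: "0 < x 1"
  proof (rule ccontr)
    assume "\<not> 0 < x 1"
    then have z: "x i = 0" if "i \<in> {1..n-1}" for i using ge[OF that] ge[of "n-1"] a n2 by fastforce
    then have "x (n - 1) = 0" using n2 by auto
    then have "x n = 0" using a by auto
    then have "x i = 0" for i
      using z xR unfolding Rn_def by (cases "i \<in> {1..n-1}"; cases "i = n") auto
    then show False using xnz by auto
  qed
  define \<mu> where "\<mu> = (x (n - 1) - x n) / (2 * x 1)"
  have mu: "0 \<le> \<mu>" unfolding \<mu>_def using a c by auto
  define y where "y = (\<lambda>i. x i / x 1 + (if i = n then \<mu> else 0))"
  have yR: "y \<in> Rn n" using xR n2 unfolding y_def Rn_def by auto
  define u' where "u' = (\<lambda>k. y k - y (Suc k))"
  have tu: "tls n u' = y" unfolding u'_def using tl_diff[OF yR] .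
  define u where "u = (\<lambda>k. u' k - (if k = n - 1 then \<mu> else 0))"
  have m1: "n - 1 \<in> {1..n}" and nn: "n \<in> {1..n}" using n2 by auto
  have upos: "\<forall>k\<in>{1..n}. 0 \<le> u k"
  proof
    fix k assume k: "k \<in> {1..n}"
    consider "k = n" | "k = n - 1" | "k < n - 1" using k by (cases "k = n"; cases "k = n - 1") auto
    then show "0 \<le> u k"
    proof cases
      case 1
      then have "u k = x n / x 1 + \<mu>" unfolding u_def u'_def y_def using xS n2 by auto
      also have "\<dots> = (x n + x (n - 1)) / (2 * x 1)" unfolding \<mu>_def using c by (simp add: field_simps)
      also have "\<dots> \<ge> 0" using a c by auto
      finally show ?thesis .
    next
      case 2
      then have "Suc k = n" using n2 by auto
      then have "u k = x (n - 1) / x 1 - (x n / x 1 + \<mu>) - \<mu>" unfolding u_def u'_def y_def using 2 n2 by auto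
      also have "\<dots> = 0" unfolding \<mu>_def using c by (simp add: field_simps)
      finally show ?thesis by simp
    next
      case 3
      then have "u k = (x k - x (Suc k)) / x 1" unfolding u_def u'_def y_def by (auto simp: diff_divide_distrib)
      moreover have "x (Suc k) \<le> x k" using m k 3 by auto
      ultimately show ?thesis using c by simp
    qed
  qed
  have "sum u {1..n} = sum u' {1..n} - \<mu>"
    unfolding u_def sum_subtractf using m1 by simp
  also have "sum u' {1..n} = y 1" using tl_first[of n u'] n2 unfolding tu by simp
  also have "y 1 = 1" unfolding y_def using c n2 by auto
  finally have su: "sum u {1..n} + \<mu> = 1" by simp
  have "(\<Sum>k=1..n. u k *\<^sub>R S k) = (\<Sum>k=1..n. u' k *\<^sub>R S k) - \<mu> *\<^sub>R S (n - 1)"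
    unfolding u_def scaleR_diff_left sum_subtractf using sum_delta_scale[OF m1] by simp
  also have "(\<Sum>k=1..n. u' k *\<^sub>R S k) = linc n y v" unfolding S_def linc_tl[symmetric] tu ..
  also have "linc n y v = \<mu> *\<^sub>R v n"
  proof -
    have "linc n y v = linc n (\<lambda>i. (1 / x 1) * x i) v + \<mu> *\<^sub>R v n"
      unfolding y_def using linc_add_delta[OF nn, of "\<lambda>i. (1 / x 1) * x i" \<mu> v] by simp
    then show ?thesis unfolding linc_scale lx by simp
  qed
  finally have "(\<Sum>k=1..n. u k *\<^sub>R S k) + \<mu> *\<^sub>R (S (n - 1) - v n) = 0"
    by (simp add: scaleR_diff_right)
  then show ?thesis using upos mu su unfolding S_def by blast
qed

lemma hullD:
  fixes v :: "nat \<Rightarrow> 'a::real_vector"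
  assumes n2: "2 \<le> n"
  shows "0 \<in> convex hull (insert ((\<Sum>i=1..n-1. v i) - v n) ((\<lambda>k. \<Sum>i=1..k. v i) ` {1..n}))
     \<longleftrightarrow> (\<exists>x\<in>KD n. x \<noteq> (\<lambda>_. 0) \<and> linc n x v = 0)"
proof -
  define f where "f = (\<lambda>k. if k = Suc n then (\<Sum>i=1..n-1. v i) - v n else (\<Sum>i=1..k. v i))"
  have im: "insert ((\<Sum>i=1..n-1. v i) - v n) ((\<lambda>k. \<Sum>i=1..k. v i) ` {1..n}) = f ` {1..Suc n}"
  proof -
    have "{1..Suc n} = insert (Suc n) {1..n}" by auto
    moreover have "f ` {1..n} = (\<lambda>k. \<Sum>i=1..k. v i) ` {1..n}" unfolding f_def by (intro image_cong) auto
    ultimately show ?thesis unfolding f_def by auto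
  qed
  have fsum: "(\<Sum>k=1..Suc n. u k *\<^sub>R f k) = (\<Sum>k=1..n. u k *\<^sub>R (\<Sum>i=1..k. v i)) + u (Suc n) *\<^sub>R ((\<Sum>i=1..n-1. v i) - v n)" for u
  proof -
    have "(\<Sum>k=1..n. u k *\<^sub>R f k) = (\<Sum>k=1..n. u k *\<^sub>R (\<Sum>i=1..k. v i))"
      unfolding f_def by (intro sum.cong) auto
    then show ?thesis by (simp add: f_def)
  qed
  show ?thesis unfolding im hull_idx[OF finite_atLeastAtMost]
  proof
    assume "\<exists>u. (\<forall>i\<in>{1..Suc n}. 0 \<le> u i) \<and> sum u {1..Suc n} = 1 \<and> (\<Sum>i=1..Suc n. u i *\<^sub>R f i) = 0"
    then obtain u where u: "\<forall>i\<in>{1..Suc n}. 0 \<le> u i" "sum u {1..Suc n} = 1" "(\<Sum>i=1..Suc n. u i *\<^sub>R f i) = 0"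
      by blast
    show "\<exists>x\<in>KD n. x \<noteq> (\<lambda>_. 0) \<and> linc n x v = 0"
    proof (rule hullD_fwd[OF n2, of u "u (Suc n)"])
      show "\<forall>k\<in>{1..n}. 0 \<le> u k" using u(1) by auto
      show "0 \<le> u (Suc n)" using u(1) by auto
      show "sum u {1..n} + u (Suc n) = 1" using u(2) by simp
      show "(\<Sum>k=1..n. u k *\<^sub>R (\<Sum>i=1..k. v i)) + u (Suc n) *\<^sub>R ((\<Sum>i=1..n-1. v i) - v n) = 0"
        using u(3) unfolding fsum .
    qed
  next
    assume "\<exists>x\<in>KD n. x \<noteq> (\<lambda>_. 0) \<and> linc n x v = 0"
    then obtain x where "x \<in> KD n" "x \<noteq> (\<lambda>_. 0)" "linc n x v = 0" by blast
    from hullD_bwd[OF n2 this] obtain u \<mu> where u: "\<forall>k\<in>{1..n}. 0 \<le> u k" "0 \<le> \<mu>" "sum u {1..n} + \<mu> = 1"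
      "(\<Sum>k=1..n. u k *\<^sub>R (\<Sum>i=1..k. v i)) + \<mu> *\<^sub>R ((\<Sum>i=1..n-1. v i) - v n) = 0" by blast
    define w where "w = u(Suc n := \<mu>)"
    have "\<forall>i\<in>{1..Suc n}. 0 \<le> w i" using u unfolding w_def by auto
    moreover have "sum w {1..Suc n} = 1"
    proof -
      have "sum w {1..n} = sum u {1..n}" unfolding w_def by (intro sum.cong) auto
      then show ?thesis using u(3) by (simp add: w_def)
    qed
    moreover have "(\<Sum>i=1..Suc n. w i *\<^sub>R f i) = 0"
    proof -
      have "(\<Sum>k=1..n. w k *\<^sub>R (\<Sum>i=1..k. v i)) = (\<Sum>k=1..n. u k *\<^sub>R (\<Sum>i=1..k. v i))"
        unfolding w_def by (intro sum.cong) auto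
      then show ?thesis unfolding fsum using u(4) by (simp add: w_def)
    qed
    ultimately show "\<exists>u. (\<forall>i\<in>{1..Suc n}. 0 \<le> u i) \<and> sum u {1..Suc n} = 1 \<and> (\<Sum>i=1..Suc n. u i *\<^sub>R f i) = 0"
      by blast
  qed
qed



definition rho :: "nat \<Rightarrow> nat \<Rightarrow> nat" where
  "rho n = (\<lambda>i. if i \<in> {1..n} then Suc n - i else i)"

definition rv :: "nat \<Rightarrow> (nat \<Rightarrow> real) \<Rightarrow> (nat \<Rightarrow> real)" where
  "rv n z = (\<lambda>j. if j \<in> {1..n} then z (Suc n - j) else 0)"

lemma rho_in: "i \<in> {1..n} \<Longrightarrow> rho n i \<in> {1..n}" unfolding rho_def by auto
lemma rho_rho: "rho n (rho n i) = i" unfolding rho_def by auto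

lemma rho_permutes: "rho n permutes {1..n}"
proof (rule bij_imp_permutes)
  show "bij_betw (rho n) {1..n} {1..n}"
    by (rule bij_betw_byWitness[of _ "rho n"]) (auto simp: rho_rho rho_def)
  show "\<And>x. x \<notin> {1..n} \<Longrightarrow> rho n x = x" unfolding rho_def by auto
qed

lemma rv_Rn: "rv n z \<in> Rn n" unfolding rv_def Rn_def by auto

lemma rv_rv: "z \<in> Rn n \<Longrightarrow> rv n (rv n z) = z"
  unfolding rv_def Rn_def by (auto simp: fun_eq_iff)

lemma rv_zero: "z \<in> Rn n \<Longrightarrow> rv n z = (\<lambda>_. 0) \<longleftrightarrow> z = (\<lambda>_. 0)"
  by (metis rv_rv rv_def)

lemma linc_rho: "linc n z (\<lambda>i. v (rho n i)) = linc n (rv n z) v"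
proof -
  have "linc n (rv n z) v = (\<Sum>i\<in>{1..n}. rv n z (rho n i) *\<^sub>R v (rho n i))"
    unfolding linc_def
    using sum.reindex_bij_betw[OF permutes_imp_bij[OF rho_permutes], of "\<lambda>j. rv n z j *\<^sub>R v j" n]
    by simp
  also have "\<dots> = linc n z (\<lambda>i. v (rho n i))"
    unfolding linc_def by (intro sum.cong refl) (auto simp: rv_def rho_def)
  finally show ?thesis ..
qed

lemma sum_rv: "(\<Sum>i=1..n. rv n z i) = (\<Sum>i=1..n. z i)"
proof -
  have "(\<Sum>i=1..n. rv n z i) = (\<Sum>i\<in>{1..n}. rv n z (rho n i))"
    using sum.reindex_bij_betw[OF permutes_imp_bij[OF rho_permutes], of "rv n z" n] by simp
  also have "\<dots> = (\<Sum>i=1..n. z i)" by (intro sum.cong refl) (auto simp: rv_def rho_def)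
  finally show ?thesis .
qed

lemma rv_mono:
  assumes "\<forall>i\<in>{1..<n}. z i \<le> z (Suc i)"
  shows "\<forall>i\<in>{1..<n}. rv n z (Suc i) \<le> rv n z i"
proof
  fix i assume i: "i \<in> {1..<n}"
  have j: "n - i \<in> {1..<n}" using i by auto
  have "z (n - i) \<le> z (Suc (n - i))" using assms j by blast
  moreover have "Suc (n - i) = Suc n - i" "Suc n - Suc i = n - i" using i by auto
  ultimately show "rv n z (Suc i) \<le> rv n z i" using i unfolding rv_def by auto
qed

lemma rv_anti:
  assumes "\<forall>i\<in>{1..<n}. x (Suc i) \<le> x i"
  shows "\<forall>i\<in>{1..<n}. rv n x i \<le> rv n x (Suc i)"
proof
  fix i assume i: "i \<in> {1..<n}"
  have j: "n - i \<in> {1..<n}" using i by auto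
  have "x (Suc (n - i)) \<le> x (n - i)" using assms j by blast
  moreover have "Suc (n - i) = Suc n - i" "Suc n - Suc i = n - i" using i by auto
  ultimately show "rv n x i \<le> rv n x (Suc i)" using i unfolding rv_def by auto
qed

lemma ex_rv:
  assumes "A \<subseteq> Rn n" "B \<subseteq> Rn n" "\<And>z. z \<in> A \<Longrightarrow> rv n z \<in> B" "\<And>x. x \<in> B \<Longrightarrow> rv n x \<in> A"
  shows "(\<exists>z\<in>A. z \<noteq> (\<lambda>_. 0) \<and> linc n z (\<lambda>i. v (rho n i)) = 0) \<longleftrightarrow> (\<exists>x\<in>B. x \<noteq> (\<lambda>_. 0) \<and> linc n x v = 0)"
proof
  assume "\<exists>z\<in>A. z \<noteq> (\<lambda>_. 0) \<and> linc n z (\<lambda>i. v (rho n i)) = 0"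
  then obtain z where z: "z \<in> A" "z \<noteq> (\<lambda>_. 0)" "linc n z (\<lambda>i. v (rho n i)) = 0" by blast
  then show "\<exists>x\<in>B. x \<noteq> (\<lambda>_. 0) \<and> linc n x v = 0"
    using assms rv_zero[of z n] linc_rho[of n z v] by (intro bexI[of _ "rv n z"]) auto
next
  assume "\<exists>x\<in>B. x \<noteq> (\<lambda>_. 0) \<and> linc n x v = 0"
  then obtain x where x: "x \<in> B" "x \<noteq> (\<lambda>_. 0)" "linc n x v = 0" by blast
  have "x \<in> Rn n" using x assms by auto
  then show "\<exists>z\<in>A. z \<noteq> (\<lambda>_. 0) \<and> linc n z (\<lambda>i. v (rho n i)) = 0"
    using x assms rv_zero[of "rv n x" n] rv_Rn linc_rho[of n "rv n x" v] rv_rv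
    by (intro bexI[of _ "rv n x"]) auto
qed

lemma cbarB_KB:
  assumes "1 \<le> n"
  shows "(\<exists>z\<in>cbar TypeB n. z \<noteq> (\<lambda>_. 0) \<and> linc n z (\<lambda>i. v (rho n i)) = 0) \<longleftrightarrow> (\<exists>x\<in>KB n. x \<noteq> (\<lambda>_. 0) \<and> linc n x v = 0)"
proof (rule ex_rv)
  show "cbar TypeB n \<subseteq> Rn n" unfolding cbar_def by auto
  show "KB n \<subseteq> Rn n" unfolding KB_def by auto
  fix z assume "z \<in> cbar TypeB n"
  then show "rv n z \<in> KB n" unfolding cbar_def KB_def using rv_mono[of n z] rv_Rn assms
    by (auto simp: rv_def)
next
  fix x assume "x \<in> KB n"
  then show "rv n x \<in> cbar TypeB n" unfolding cbar_def KB_def using rv_anti[of n x] rv_Rn assms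
    by (auto simp: rv_def)
qed

lemma cbarD_KD:
  assumes "2 \<le> n"
  shows "(\<exists>z\<in>cbar TypeD n. z \<noteq> (\<lambda>_. 0) \<and> linc n z (\<lambda>i. v (rho n i)) = 0) \<longleftrightarrow> (\<exists>x\<in>KD n. x \<noteq> (\<lambda>_. 0) \<and> linc n x v = 0)"
proof (rule ex_rv)
  show "cbar TypeD n \<subseteq> Rn n" unfolding cbar_def by auto
  show "KD n \<subseteq> Rn n" unfolding KD_def by auto
  have e: "Suc n - (n - 1) = 2" "Suc n - 2 = n - 1" using assms by auto
  fix z assume "z \<in> cbar TypeD n"
  then show "rv n z \<in> KD n" unfolding cbar_def KD_def using rv_mono[of n z] rv_Rn assms e
    by (auto simp: rv_def)
next
  have e: "Suc n - (n - 1) = 2" "Suc n - 2 = n - 1" using assms by auto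
  fix x assume "x \<in> KD n"
  then show "rv n x \<in> cbar TypeD n" unfolding cbar_def KD_def using rv_anti[of n x] rv_Rn assms e
    by (auto simp: rv_def)
qed

definition KA' :: "nat \<Rightarrow> (nat \<Rightarrow> real) set" where
  "KA' n = {x \<in> Rn n. (\<forall>i\<in>{1..<n}. x (Suc i) \<le> x i) \<and> (\<Sum>i=1..n. x i) = 0}"

lemma cbarA_KA':
  shows "(\<exists>z\<in>cbar TypeA n. z \<noteq> (\<lambda>_. 0) \<and> linc n z (\<lambda>i. v (rho n i)) = 0) \<longleftrightarrow> (\<exists>x\<in>KA' n. x \<noteq> (\<lambda>_. 0) \<and> linc n x v = 0)"
proof (rule ex_rv)
  show "cbar TypeA n \<subseteq> Rn n" unfolding cbar_def by auto
  show "KA' n \<subseteq> Rn n" unfolding KA'_def by auto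
  fix z assume "z \<in> cbar TypeA n"
  then show "rv n z \<in> KA' n" unfolding cbar_def KA'_def using rv_mono[of n z] rv_Rn sum_rv[of n z]
    by auto
next
  fix x assume "x \<in> KA' n"
  then show "rv n x \<in> cbar TypeA n" unfolding cbar_def KA'_def using rv_anti[of n x] rv_Rn sum_rv[of n x]
    by auto
qed

definition sh :: "nat \<Rightarrow> real \<Rightarrow> (nat \<Rightarrow> real) \<Rightarrow> (nat \<Rightarrow> real)" where
  "sh n c x = (\<lambda>i. if i \<in> {1..n} then x i - c else 0)"

lemma linc_sh:
  fixes v :: "nat \<Rightarrow> 'a::real_vector"
  assumes "(\<Sum>i=1..n. v i) = 0"
  shows "linc n (sh n c x) v = linc n x v"
proof -
  have "linc n (sh n c x) v = (\<Sum>i=1..n. x i *\<^sub>R v i - c *\<^sub>R v i)"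
    unfolding linc_def sh_def by (intro sum.cong) (auto simp: scaleR_diff_left)
  also have "\<dots> = linc n x v - c *\<^sub>R (\<Sum>i=1..n. v i)"
    unfolding linc_def sum_subtractf scaleR_sum_right ..
  finally show ?thesis using assms by simp
qed

lemma KA_KA':
  fixes v :: "nat \<Rightarrow> 'a::real_vector"
  assumes "1 \<le> n" "(\<Sum>i=1..n. v i) = 0"
  shows "(\<exists>x\<in>KA n. x \<noteq> (\<lambda>_. 0) \<and> linc n x v = 0) \<longleftrightarrow> (\<exists>x\<in>KA' n. x \<noteq> (\<lambda>_. 0) \<and> linc n x v = 0)"
proof
  assume "\<exists>x\<in>KA n. x \<noteq> (\<lambda>_. 0) \<and> linc n x v = 0"
  then obtain x where x: "x \<in> KA n" "x \<noteq> (\<lambda>_. 0)" "linc n x v = 0" by blast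
  have xR: "x \<in> Rn n" using x unfolding KA_def by auto
  define c where "c = (\<Sum>i=1..n. x i) / n"
  have "sh n c x \<in> KA' n"
  proof -
    have "(\<Sum>i=1..n. sh n c x i) = (\<Sum>i=1..n. x i) - real n * c"
      unfolding sh_def by (simp add: sum_subtractf)
    also have "\<dots> = 0" unfolding c_def using assms by simp
    finally show ?thesis using x unfolding KA'_def KA_def sh_def Rn_def by auto
  qed
  moreover have "sh n c x \<noteq> (\<lambda>_. 0)"
  proof
    assume h: "sh n c x = (\<lambda>_. 0)"
    have "x i = c" if "i \<in> {1..n}" for i using fun_cong[OF h, of i] that unfolding sh_def by auto
    moreover have "x n = 0" using x unfolding KA_def by auto
    ultimately have "c = 0" using assms by force
    then have "x i = 0" for i using \<open>\<And>i. i \<in> {1..n} \<Longrightarrow> x i = c\<close> xR unfolding Rn_def by (cases "i \<in> {1..n}") auto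
    then show False using x by auto
  qed
  ultimately show "\<exists>x\<in>KA' n. x \<noteq> (\<lambda>_. 0) \<and> linc n x v = 0" using linc_sh[OF assms(2)] x by metis
next
  assume "\<exists>x\<in>KA' n. x \<noteq> (\<lambda>_. 0) \<and> linc n x v = 0"
  then obtain x where x: "x \<in> KA' n" "x \<noteq> (\<lambda>_. 0)" "linc n x v = 0" by blast
  have xR: "x \<in> Rn n" using x unfolding KA'_def by auto
  define c where "c = x n"
  have "sh n c x \<in> KA n" using x assms unfolding KA'_def KA_def sh_def Rn_def c_def by auto
  moreover have "sh n c x \<noteq> (\<lambda>_. 0)"
  proof
    assume h: "sh n c x = (\<lambda>_. 0)"
    have xc: "x i = c" if "i \<in> {1..n}" for i using fun_cong[OF h, of i] that unfolding sh_def by auto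
    have "(\<Sum>i=1..n. x i) = real n * c" using xc by simp
    moreover have "(\<Sum>i=1..n. x i) = 0" using x unfolding KA'_def by auto
    ultimately have "c = 0" using assms by simp
    then have "x i = 0" for i using xc xR unfolding Rn_def by (cases "i \<in> {1..n}") auto
    then show False using x by auto
  qed
  ultimately show "\<exists>x\<in>KA n. x \<noteq> (\<lambda>_. 0) \<and> linc n x v = 0" using linc_sh[OF assms(2)] x by metis
qed



lemma Ymeas:
  fixes \<xi> :: "nat \<Rightarrow> 'w \<Rightarrow> real^'d"
  assumes meas: "\<forall>i\<in>{1..n}. \<xi> i \<in> borel_measurable M" and sig: "\<sigma> permutes {1..n}"
  shows "(\<lambda>\<omega>. restrict (\<lambda>i. \<epsilon> i *\<^sub>R \<xi> (\<sigma> i) \<omega>) {1..n}) \<in> measurable M (PiM {1..n} (\<lambda>_. borel :: (real^'d) measure))"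
proof (rule measurable_restrict)
  fix i :: nat assume "i \<in> {1..n}"
  then have "\<sigma> i \<in> {1..n}" by (rule iffD2[OF permutes_in_image[OF sig]])
  then have "\<xi> (\<sigma> i) \<in> borel_measurable M" using meas by auto
  then show "(\<lambda>\<omega>. \<epsilon> i *\<^sub>R \<xi> (\<sigma> i) \<omega>) \<in> borel_measurable M"
    by (rule borel_measurable_scaleR[OF borel_measurable_const])
qed

lemma Ymeas':
  fixes \<xi> :: "nat \<Rightarrow> 'w \<Rightarrow> real^'d"
  assumes meas: "\<forall>i\<in>{1..n}. \<xi> i \<in> borel_measurable M"
  shows "(\<lambda>\<omega>. restrict (\<lambda>i. \<xi> i \<omega>) {1..n}) \<in> measurable M (PiM {1..n} (\<lambda>_. borel :: (real^'d) measure))"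
  using meas by (intro measurable_restrict) simp

lemma pre_sets: "f \<in> measurable M N \<Longrightarrow> A \<in> sets N \<Longrightarrow> {\<omega>\<in>space M. f \<omega> \<in> A} \<in> sets M"
proof -
  assume "f \<in> measurable M N" "A \<in> sets N"
  moreover have "{\<omega>\<in>space M. f \<omega> \<in> A} = f -` A \<inter> space M" by auto
  ultimately show ?thesis using measurable_sets by metis
qed

lemma Ev_restrict: "restrict f {1..n} \<in> Ev n K \<longleftrightarrow> (\<exists>x\<in>K. x \<noteq> (\<lambda>_. 0) \<and> linc n x f = 0)"
  unfolding Ev_def by (simp add: linc_restrict')

lemma cbar_cone: "x \<in> cbar t n \<Longrightarrow> 0 < c \<Longrightarrow> (\<lambda>i. c * x i) \<in> cbar t n"
  unfolding cbar_def Rn_def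
  by (cases t) (auto simp: sum_distrib_left[symmetric] abs_mult)

lemma cbar_Rn: "cbar t n \<subseteq> Rn n" unfolding cbar_def by auto

lemma zero_cbar: "(\<lambda>_. 0) \<in> cbar t n" unfolding cbar_def Rn_def by (cases t) auto

lemma KA_cone: "x \<in> KA n \<Longrightarrow> 0 < c \<Longrightarrow> (\<lambda>i. c * x i) \<in> KA n"
  unfolding KA_def Rn_def by auto

lemma seqcl_KA: "seqcl (KA n)"
  unfolding seqcl_def
proof (intro allI impI)
  fix X x assume X: "\<forall>j. X j \<in> KA n" and c: "\<forall>i. (\<lambda>j. X j i) \<longlonglongrightarrow> x i"
  have z: "x i = 0" if "(\<lambda>j. X j i) = (\<lambda>j. 0)" for i
  proof -
    have "(\<lambda>j. 0::real) \<longlonglongrightarrow> x i" using c that by metis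
    then show "x i = 0" using LIMSEQ_const_iff by metis
  qed
  have "x \<in> Rn n" unfolding Rn_def
  proof (intro CollectI allI impI)
    fix i assume "i \<notin> {1..n}"
    then have "(\<lambda>j. X j i) = (\<lambda>j. 0)" using X unfolding KA_def Rn_def by auto
    then show "x i = 0" using z by blast
  qed
  moreover have "x (Suc i) \<le> x i" if "i \<in> {1..<n}" for i
    using c that X unfolding KA_def by (intro LIMSEQ_le[of "\<lambda>j. X j (Suc i)" _ "\<lambda>j. X j i"]) auto
  moreover have "x n = 0"
  proof -
    have "(\<lambda>j. X j n) = (\<lambda>j. 0)" using X unfolding KA_def by auto
    then show ?thesis using z by blast
  qed
  ultimately show "x \<in> KA n" unfolding KA_def by auto
qed



theorem lemma6p1:
  fixes t :: rtype and M :: "'w measure" and n :: nat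
    and \<xi> :: "nat \<Rightarrow> 'w \<Rightarrow> real^'d" and g :: "(nat \<Rightarrow> real) \<Rightarrow> (nat \<Rightarrow> real)"
  assumes "type_assms t M n \<xi>"
    and "g \<in> Grp t n"
  shows "measure M {\<omega> \<in> space M. 0 \<in> hull_pts t n \<xi> \<omega>}
       = measure M {\<omega> \<in> space M. kerA n \<xi> \<omega> \<inter> g ` closure (chamber t n) \<noteq> {\<lambda>_. 0}}"
proof -
  have meas: "\<forall>i\<in>{1..n}. \<xi> i \<in> borel_measurable M"
    and sz: "case t of TypeA \<Rightarrow> n \<ge> CARD('d) + 1 | TypeB \<Rightarrow> n \<ge> CARD('d) | TypeD \<Rightarrow> n \<ge> max 2 CARD('d)"
    and inv: "\<And>\<sigma> \<epsilon>. \<sigma> permutes {1..n} \<Longrightarrow> admissible_signs t n \<epsilon> \<Longrightarrow>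
        joint_law M n \<xi> = joint_law M n (\<lambda>i \<omega>. \<epsilon> i *\<^sub>R \<xi> (\<sigma> i) \<omega>)"
    and ae: "t = TypeA \<Longrightarrow> (AE \<omega> in M. psum \<xi> n \<omega> = 0)"
    using assms(1) unfolding type_assms_def by auto
  have cd: "0 < CARD('d)" by simp
  have "CARD('d) \<le> n" using sz by (cases t) auto
  then have n1: "1 \<le> n" using cd by linarith
  have nD: "t = TypeD \<longrightarrow> 2 \<le> n" using sz by (cases t) auto
  have nA: "t = TypeA \<Longrightarrow> 2 \<le> n"
  proof -
    assume "t = TypeA"
    then have "CARD('d) + 1 \<le> n" using sz by simp
    then show "2 \<le> n" using cd by linarith
  qed
  obtain \<sigma> \<epsilon> where g: "g = gmap n \<sigma> \<epsilon>" and sig: "\<sigma> permutes {1..n}" and adm: "admissible_signs t n \<epsilon>"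
    using assms(2) unfolding Grp_def by auto
  have eps: "\<forall>i\<in>{1..n}. \<epsilon> i \<in> {-1,1}" using adm unfolding admissible_signs_def by auto
  define Kc where "Kc = cbar t n"
  have clo: "closure (chamber t n) = Kc" unfolding Kc_def using closure_chamber[OF n1 nD] .
  define N where "N = PiM {1..n} (\<lambda>_. borel :: (real^'d) measure)"
  define E where "E = {y \<in> space N. y \<in> Ev n Kc}"
  have Esets: "E \<in> sets N" unfolding E_def N_def Kc_def
    by (rule Ev_meas[OF cbar_Rn cbar_cone seqcl_cbar])
  have spY: "restrict f {1..n} \<in> space N" for f :: "nat \<Rightarrow> real^'d"
    unfolding N_def by (simp add: space_PiM)
  have memE: "restrict f {1..n} \<in> E \<longleftrightarrow> restrict f {1..n} \<in> Ev n Kc" for f :: "nat \<Rightarrow> real^'d"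
    unfolding E_def using spY by auto
  define P where "P = measure M {\<omega>\<in>space M. restrict (\<lambda>i. \<xi> i \<omega>) {1..n} \<in> E}"
  have rho_adm: "admissible_signs t n (\<lambda>_. 1)" unfolding admissible_signs_def by auto
  have lawrho: "measure M {\<omega>\<in>space M. restrict (\<lambda>i. 1 *\<^sub>R \<xi> (rho n i) \<omega>) {1..n} \<in> E} = P"
    unfolding P_def using law_eq[OF meas rho_permutes Esets[unfolded N_def] inv[OF rho_permutes rho_adm]] by simp
  have R: "measure M {\<omega> \<in> space M. kerA n \<xi> \<omega> \<inter> g ` closure (chamber t n) \<noteq> {\<lambda>_. 0}} = P"
  proof -
    have "{\<omega> \<in> space M. kerA n \<xi> \<omega> \<inter> g ` closure (chamber t n) \<noteq> {\<lambda>_. 0}}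
        = {\<omega>\<in>space M. restrict (\<lambda>i. \<epsilon> i *\<^sub>R \<xi> (\<sigma> i) \<omega>) {1..n} \<in> E}"
      unfolding g clo memE Kc_def by (intro Collect_cong conj_cong refl) (rule event_eq[OF sig eps cbar_Rn zero_cbar])
    then show ?thesis
      unfolding P_def using law_eq[OF meas sig Esets[unfolded N_def] inv[OF sig adm]] by simp
  qed
  have L: "measure M {\<omega> \<in> space M. 0 \<in> hull_pts t n \<xi> \<omega>} = P"
  proof (cases t)
    case TypeB
    have "{\<omega> \<in> space M. 0 \<in> hull_pts t n \<xi> \<omega>} = {\<omega>\<in>space M. restrict (\<lambda>i. 1 *\<^sub>R \<xi> (rho n i) \<omega>) {1..n} \<in> E}"
    proof (intro Collect_cong conj_cong refl)
      fix \<omega>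
      show "(0 \<in> hull_pts t n \<xi> \<omega>) = (restrict (\<lambda>i. 1 *\<^sub>R \<xi> (rho n i) \<omega>) {1..n} \<in> E)"
        unfolding memE Ev_restrict hull_pts_def psum_def TypeB Kc_def
        using hullB[OF n1, of "\<lambda>i. \<xi> i \<omega>"] cbarB_KB[OF n1, of "\<lambda>i. \<xi> i \<omega>"] by simp
    qed
    then show ?thesis using lawrho by simp
  next
    case TypeD
    then have n2: "2 \<le> n" using nD by simp
    have "{\<omega> \<in> space M. 0 \<in> hull_pts t n \<xi> \<omega>} = {\<omega>\<in>space M. restrict (\<lambda>i. 1 *\<^sub>R \<xi> (rho n i) \<omega>) {1..n} \<in> E}"
    proof (intro Collect_cong conj_cong refl)
      fix \<omega>
      show "(0 \<in> hull_pts t n \<xi> \<omega>) = (restrict (\<lambda>i. 1 *\<^sub>R \<xi> (rho n i) \<omega>) {1..n} \<in> E)"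
        unfolding memE Ev_restrict hull_pts_def psum_star_def psum_def TypeD Kc_def
        using hullD[OF n2, of "\<lambda>i. \<xi> i \<omega>"] cbarD_KD[OF n2, of "\<lambda>i. \<xi> i \<omega>"] by simp
    qed
    then show ?thesis using lawrho by simp
  next
    case TypeA
    then have n2: "2 \<le> n" using nA by simp
    define EA where "EA = {y \<in> space N. y \<in> Ev n (KA n)}"
    have EAsets: "EA \<in> sets N" unfolding EA_def N_def
      by (rule Ev_meas[OF _ KA_cone seqcl_KA]) (auto simp: KA_def)
    have memEA: "restrict f {1..n} \<in> EA \<longleftrightarrow> restrict f {1..n} \<in> Ev n (KA n)" for f :: "nat \<Rightarrow> real^'d"
      unfolding EA_def using spY by auto
    have h1: "{\<omega> \<in> space M. 0 \<in> hull_pts t n \<xi> \<omega>} = {\<omega>\<in>space M. restrict (\<lambda>i. \<xi> i \<omega>) {1..n} \<in> EA}"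
    proof (intro Collect_cong conj_cong refl)
      fix \<omega>
      show "(0 \<in> hull_pts t n \<xi> \<omega>) = (restrict (\<lambda>i. \<xi> i \<omega>) {1..n} \<in> EA)"
        unfolding memEA Ev_restrict hull_pts_def psum_def TypeA
        using hullA[OF n2, of "\<lambda>i. \<xi> i \<omega>"] by simp
    qed
    have "measure M {\<omega>\<in>space M. restrict (\<lambda>i. \<xi> i \<omega>) {1..n} \<in> EA}
        = measure M {\<omega>\<in>space M. restrict (\<lambda>i. 1 *\<^sub>R \<xi> (rho n i) \<omega>) {1..n} \<in> E}"
    proof (rule measure_eq_AE)
      show "{\<omega>\<in>space M. restrict (\<lambda>i. \<xi> i \<omega>) {1..n} \<in> EA} \<in> sets M"
        using pre_sets[OF Ymeas'[OF meas] EAsets[unfolded N_def]] .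
      show "{\<omega>\<in>space M. restrict (\<lambda>i. 1 *\<^sub>R \<xi> (rho n i) \<omega>) {1..n} \<in> E} \<in> sets M"
        using pre_sets[OF Ymeas[OF meas rho_permutes] Esets[unfolded N_def]] .
      show "AE \<omega> in M. (\<omega> \<in> {\<omega>\<in>space M. restrict (\<lambda>i. \<xi> i \<omega>) {1..n} \<in> EA}) =
              (\<omega> \<in> {\<omega>\<in>space M. restrict (\<lambda>i. 1 *\<^sub>R \<xi> (rho n i) \<omega>) {1..n} \<in> E})"
      proof (rule AE_mp[OF ae[OF TypeA]], rule AE_I2, rule impI)
        fix \<omega> assume "\<omega> \<in> space M" and ps: "psum \<xi> n \<omega> = 0"
        have sv: "(\<Sum>i=1..n. \<xi> i \<omega>) = 0" using ps unfolding psum_def .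
        have "restrict (\<lambda>i. \<xi> i \<omega>) {1..n} \<in> EA \<longleftrightarrow> restrict (\<lambda>i. 1 *\<^sub>R \<xi> (rho n i) \<omega>) {1..n} \<in> E"
          unfolding memEA memE Ev_restrict Kc_def TypeA
          using KA_KA'[OF n1 sv] cbarA_KA'[of n "\<lambda>i. \<xi> i \<omega>"] by simp
        then show "(\<omega> \<in> {\<omega>\<in>space M. restrict (\<lambda>i. \<xi> i \<omega>) {1..n} \<in> EA}) =
              (\<omega> \<in> {\<omega>\<in>space M. restrict (\<lambda>i. 1 *\<^sub>R \<xi> (rho n i) \<omega>) {1..n} \<in> E})" by simp
      qed
    qed
    then show ?thesis using h1 lawrho by simp
  qed
  show ?thesis using L R by simp
qed


end
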